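(* Fix $c>0$, a class index $k$, an input $x\in\mathbb{R}^d$, and patch matrices $D_1,\dots,D_J\in\mathbb{R}^{p\times d}$ such that $y^{(j)}=D_jx\neq 0$ for all $j$. Let $(w^{(i)})_{i\ge 1}$ be i.i.d. $\mathcal{N}(0,c^2I_p)$ vectors and $(V_{(i-1)J+j,k})_{i\ge1,\,1\le j\le J}$ i.i.d. $\mathcal{N}(0,c^2)$ scalars, all mutually independent; the network with $N$ filters uses $w^{(1)},\dots,w^{(N)}$ and $V_{q_{ij},k}$ for $i\le N$. For a fixed constant $\tilde Z>0$, let the GBP visualization of the $k$-th logit of the $N$-filter network be $$s^{\mathrm{GBP},N}_k(x)=\frac{1}{\tilde Z N}\sum_{j=1}^{J}D_j^T\sum_{i=1}^{N}\sigma\big(V_{q_{ij},k}\big)\,w^{(i)}\,\mathbb{I}\big(w^{(i)T}y^{(j)}\big).$$ Then, almost surely as $N\to\infty$, $$s^{\mathrm{GBP},N}_k(x)\longrightarrow \frac{c^2}{2\pi\tilde Z}\sum_{j=1}^{J}\frac{D_j^Ty^{(j)}}{\|y^{(j)}\|_2}.$$ In particular, if in addition $\|y^{(j)}\|_2=C_0$ for all $j$ (for some constant $C_0>0$) and $\sum_{j=1}^JD_j^TD_j=pI_d$, then the limit equals $\frac{c^2p}{2\pi C_0\tilde Z}\,x$, which equals $x$ when $\tilde Z=\frac{c^2p}{2\pi C_0}$ (independently of $k$).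
   Context: $\sigma(t)=\max(t,0)$; $\mathbb{I}(t)=1$ if $t>0$ and $0$ otherwise; $q_{ij}=(i-1)J+j$. The patch-extraction matrices are $D_j=\begin{bmatrix}0_{p\times (j-1)b} & I_{p\times p} & 0_{p\times(d-(j-1)b-p)}\end{bmatrix}$ for a stride $b$, and $y^{(j)}=D_jx$. The displayed formula is the guided-backpropagation visualization (modified gradient in which both the forward ReLU mask $\mathbb{I}(w^{(i)T}y^{(j)})$ and the backward ReLU on the top gradient $V_{q_{ij},k}$ are applied) of the logit $f_k(x)=\sum_{i=1}^{N}\sum_{j=1}^{J}V_{q_{ij},k}\,\sigma(w^{(i)T}y^{(j)})$ of a random three-layer CNN, with normalization $Z_k=\tilde ZN$. *)

theory Defs
  imports "HOL-Probability.Probability"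
begin

definition relu :: "real \<Rightarrow> real" where
  "relu t = max t 0"

definition ind :: "real \<Rightarrow> real" where
  "ind t = (if t > 0 then 1 else 0)"

text \<open>q_{ij} = (i-1)J + j (indices i, j start at 1).\<close>
definition qidx :: "nat \<Rightarrow> nat \<Rightarrow> nat \<Rightarrow> nat" where
  "qidx J i j = (i - 1) * J + j"

definition sGBP ::
  "real \<Rightarrow> nat \<Rightarrow> (nat \<Rightarrow> real^'d^'p) \<Rightarrow> (nat \<Rightarrow> real^'p) \<Rightarrow> (nat \<Rightarrow> nat \<Rightarrow> real)
     \<Rightarrow> nat \<Rightarrow> nat \<Rightarrow> real^'d \<Rightarrow> real^'d" where
  "sGBP Zt J D w V k N x =
     (1 / (Zt * real N)) *\<^sub>R
       (\<Sum>j=1..J. transpose (D j) *v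
          (\<Sum>i=1..N. (relu (V (qidx J i j) k) * ind (w i \<bullet> (D j *v x))) *\<^sub>R w i))"

end

theory Submission
  imports Defs "HOL-Real_Asymp.Real_Asymp" "HOL-Library.Discrete_Functions"
begin


lemma normal_density_deriv:
  assumes "\<sigma> > 0"
  shows "((\<lambda>s. - (\<sigma>\<^sup>2 * normal_density 0 \<sigma> s)) has_real_derivative (s * normal_density 0 \<sigma> s)) (at s)"
  unfolding normal_density_def
  apply (insert assms)
  apply (rule derivative_eq_intros refl | simp)+
  apply (simp add: field_simps power2_eq_square power4_eq_xxxx)
  done

lemma tail_integral:
  assumes s: "\<sigma> > 0"
  shows "set_integrable lborel {t<..} (\<lambda>s. s * normal_density 0 \<sigma> s)"
    and "(LINT s:{t<..}|lborel. s * normal_density 0 \<sigma> s) = \<sigma>\<^sup>2 * normal_density 0 \<sigma> t"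
proof -
  have int: "integrable lborel (\<lambda>s. s * normal_density 0 \<sigma> s)"
    using integrable_normal_moment_nz_1[OF s, of 0] by (simp add: mult.commute)
  show si: "set_integrable lborel {t<..} (\<lambda>s. s * normal_density 0 \<sigma> s)"
    unfolding set_integrable_def by (rule integrable_mult_indicator[OF _ int]) auto
  have "(LBINT s=ereal t..\<infinity>. s * normal_density 0 \<sigma> s) = 0 - (- (\<sigma>\<^sup>2 * normal_density 0 \<sigma> t))"
  proof (rule interval_integral_FTC_integrable)
    show "ereal t < \<infinity>" by simp
    show "((\<lambda>s. - (\<sigma>\<^sup>2 * normal_density 0 \<sigma> s)) has_vector_derivative x * normal_density 0 \<sigma> x) (at x)" for x
      using normal_density_deriv[OF s, of x] by (simp add: has_real_derivative_iff_has_vector_derivative)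
    show "isCont (\<lambda>s. s * normal_density 0 \<sigma> s) x" for x
      unfolding normal_density_def using s by (intro continuous_intros) auto
    show "set_integrable lborel (einterval (ereal t) \<infinity>) (\<lambda>s. s * normal_density 0 \<sigma> s)"
      using si by (simp add: einterval_def greaterThan_def)
    show "(((\<lambda>s. - (\<sigma>\<^sup>2 * normal_density 0 \<sigma> s)) \<circ> real_of_ereal) \<longlongrightarrow> - (\<sigma>\<^sup>2 * normal_density 0 \<sigma> t)) (at_right (ereal t))"
      unfolding ereal_tendsto_simps normal_density_def
      using s by (intro tendsto_intros continuous_intros) (auto simp: power2_eq_square)
    have "((\<lambda>s. exp (-(s - 0)\<^sup>2/ (2 * \<sigma>\<^sup>2))) \<longlongrightarrow> 0) at_top"
      using s by real_asymp
    then have "((\<lambda>s. - (\<sigma>\<^sup>2 * (1 / sqrt (2 * pi * \<sigma>\<^sup>2) * exp (-(s - 0)\<^sup>2/ (2 * \<sigma>\<^sup>2))))) \<longlongrightarrow> - (\<sigma>\<^sup>2 * (1 / sqrt (2 * pi * \<sigma>\<^sup>2) * 0))) at_top"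
      by (intro tendsto_intros)
    then show "(((\<lambda>s. - (\<sigma>\<^sup>2 * normal_density 0 \<sigma> s)) \<circ> real_of_ereal) \<longlongrightarrow> 0) (at_left \<infinity>)"
      unfolding ereal_tendsto_simps normal_density_def by simp
  qed
  then show "(LINT s:{t<..}|lborel. s * normal_density 0 \<sigma> s) = \<sigma>\<^sup>2 * normal_density 0 \<sigma> t"
    by (simp add: interval_integral_to_infinity_eq)
qed

lemma normal_density_even: "normal_density 0 \<sigma> (- x) = normal_density 0 \<sigma> x"
  by (simp add: normal_density_def)

lemma ind_measurable[measurable]: "ind \<in> borel_measurable borel"
  unfolding ind_def by measurable

lemma relu_measurable[measurable]: "relu \<in> borel_measurable borel"
  unfolding relu_def by measurable

definition gfun :: "real \<Rightarrow> real \<Rightarrow> real \<Rightarrow> real" where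
  "gfun \<sigma> a r = (if a > 0 then \<sigma>\<^sup>2 * normal_density 0 \<sigma> (r/a)
     else if a < 0 then - (\<sigma>\<^sup>2 * normal_density 0 \<sigma> (r/a)) else 0)"

lemma inner_pos:
  assumes s: "\<sigma> > 0" and a: "a > 0"
  shows "integrable lborel (\<lambda>s. ind (a * s + r) * s * normal_density 0 \<sigma> s)"
    and "(\<integral>s. ind (a * s + r) * s * normal_density 0 \<sigma> s \<partial>lborel) = \<sigma>\<^sup>2 * normal_density 0 \<sigma> (r/a)"
proof -
  have eq: "(\<lambda>s. ind (a * s + r) * s * normal_density 0 \<sigma> s) = (\<lambda>s. indicator {-r/a<..} s * (s * normal_density 0 \<sigma> s))"
  proof
    fix s
    have "(a * s + r > 0) = (s > -r/a)" using a by (auto simp: field_simps)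
    then show "ind (a * s + r) * s * normal_density 0 \<sigma> s = indicator {-r/a<..} s * (s * normal_density 0 \<sigma> s)"
      by (auto simp: ind_def indicator_def)
  qed
  show "integrable lborel (\<lambda>s. ind (a * s + r) * s * normal_density 0 \<sigma> s)"
    using tail_integral(1)[OF s, of "-r/a"] unfolding eq set_integrable_def by simp
  show "(\<integral>s. ind (a * s + r) * s * normal_density 0 \<sigma> s \<partial>lborel) = \<sigma>\<^sup>2 * normal_density 0 \<sigma> (r/a)"
    using tail_integral(2)[OF s, of "-r/a"] unfolding eq set_lebesgue_integral_def
    by (simp add: normal_density_even)
qed

lemma inner_gen:
  assumes s: "\<sigma> > 0"
  shows "integrable lborel (\<lambda>s. ind (a * s + r) * s * normal_density 0 \<sigma> s)"
    and "(\<integral>s. ind (a * s + r) * s * normal_density 0 \<sigma> s \<partial>lborel) = gfun \<sigma> a r"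
proof -
  have "integrable lborel (\<lambda>s. ind (a * s + r) * s * normal_density 0 \<sigma> s) \<and>
        (\<integral>s. ind (a * s + r) * s * normal_density 0 \<sigma> s \<partial>lborel) = gfun \<sigma> a r"
  proof (cases "a > 0")
    case True
    then show ?thesis using inner_pos[OF s True, of r] by (simp add: gfun_def)
  next
    case False
    show ?thesis
    proof (cases "a < 0")
      case True
      have na: "-a > 0" using True by simp
      have e: "(\<lambda>x. ind (a * (0 + -1 * x) + r) * (0 + -1*x) * normal_density 0 \<sigma> (0 + -1*x))
          = (\<lambda>x. - (ind ((-a) * x + r) * x * normal_density 0 \<sigma> x))"
        by (auto simp: normal_density_even)
      have i1: "integrable lborel (\<lambda>x. ind (a * (0 + -1 * x) + r) * (0 + -1*x) * normal_density 0 \<sigma> (0 + -1*x))"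
        unfolding e using inner_pos(1)[OF s na, of r] by simp
      have "integrable lborel (\<lambda>s. ind (a * s + r) * s * normal_density 0 \<sigma> s)"
        using lborel_integrable_real_affine_iff[of "-1" "\<lambda>s. ind (a * s + r) * s * normal_density 0 \<sigma> s" 0] i1
        by simp
      moreover have "(\<integral>s. ind (a * s + r) * s * normal_density 0 \<sigma> s \<partial>lborel) = gfun \<sigma> a r"
        using lborel_integral_real_affine[of "-1" "\<lambda>s. ind (a * s + r) * s * normal_density 0 \<sigma> s" 0]
        unfolding e using inner_pos(2)[OF s na, of r] True
        by (simp add: gfun_def normal_density_even)
      ultimately show ?thesis by simp
    next
      case False
      then have a0: "a = 0" using \<open>\<not> a > 0\<close> by simp
      have e: "(\<lambda>s. ind (a * s + r) * s * normal_density 0 \<sigma> s) = (\<lambda>s. ind r * (normal_density 0 \<sigma> s * s))"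
        using a0 by (auto simp: fun_eq_iff)
      show ?thesis unfolding e using a0 integral_normal_moment_nz_1[OF s, of 0]
          integrable_normal_moment_nz_1[OF s, of 0]
        by (simp add: gfun_def)
    qed
  qed
  then show "integrable lborel (\<lambda>s. ind (a * s + r) * s * normal_density 0 \<sigma> s)"
    and "(\<integral>s. ind (a * s + r) * s * normal_density 0 \<sigma> s \<partial>lborel) = gfun \<sigma> a r" by auto
qed


lemma prod_gauss:
  assumes r: "\<rho> > 0" and t: "\<tau> > 0"
  shows "has_bochner_integral lborel (\<lambda>x. normal_density 0 \<tau> x * normal_density 0 \<rho> x) (1 / sqrt (2 * pi * (\<tau>\<^sup>2 + \<rho>\<^sup>2)))"
proof (rule has_bochner_integral_nn_integral)
  show "(\<lambda>x. normal_density 0 \<tau> x * normal_density 0 \<rho> x) \<in> borel_measurable lborel" by measurable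
  show "AE x in lborel. 0 \<le> normal_density 0 \<tau> x * normal_density 0 \<rho> x" by simp
  show "0 \<le> 1 / sqrt (2 * pi * (\<tau>\<^sup>2 + \<rho>\<^sup>2))" by simp
  have "(\<integral>\<^sup>+y. ennreal (normal_density 0 \<rho> (0 - y) * normal_density 0 \<tau> y) \<partial>lborel) =
      normal_density 0 (sqrt (\<rho>\<^sup>2 + \<tau>\<^sup>2)) 0"
    using fun_cong[OF conv_normal_density_zero_mean[OF r t], of 0] by simp
  moreover have "normal_density 0 (sqrt (\<rho>\<^sup>2 + \<tau>\<^sup>2)) 0 = 1 / sqrt (2 * pi * (\<tau>\<^sup>2 + \<rho>\<^sup>2))"
    using r t by (simp add: normal_density_def add.commute)
  ultimately show "(\<integral>\<^sup>+x. ennreal (normal_density 0 \<tau> x * normal_density 0 \<rho> x) \<partial>lborel) = ennreal (1 / sqrt (2 * pi * (\<tau>\<^sup>2 + \<rho>\<^sup>2)))"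
    by (simp add: normal_density_even mult.commute)
qed

lemma normal_density_scale:
  assumes "a \<noteq> 0" "\<sigma> > 0"
  shows "normal_density 0 \<sigma> (r / a) = \<bar>a\<bar> * normal_density 0 (\<sigma> * \<bar>a\<bar>) r"
proof -
  have "sqrt (2 * pi * (\<sigma> * \<bar>a\<bar>)\<^sup>2) = sqrt (2 * pi * \<sigma>\<^sup>2) * \<bar>a\<bar>"
    by (simp add: power_mult_distrib real_sqrt_mult)
  moreover have "(r / a)\<^sup>2 / (2 * \<sigma>\<^sup>2) = r\<^sup>2 / (2 * (\<sigma> * \<bar>a\<bar>)\<^sup>2)"
    using assms by (simp add: power_mult_distrib power_divide field_simps)
  ultimately show ?thesis using assms unfolding normal_density_def by (simp add: field_simps)
qed

lemma outer_int:
  assumes s: "\<sigma> > 0" and t: "\<tau> > 0"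
  shows "(\<integral>r. normal_density 0 \<tau> r * gfun \<sigma> a r \<partial>lborel) = a * \<sigma>\<^sup>2 / sqrt (2 * pi * (\<tau>\<^sup>2 + \<sigma>\<^sup>2 * a\<^sup>2))"
proof (cases "a = 0")
  case True then show ?thesis by (simp add: gfun_def)
next
  case False
  then have pa: "\<sigma> * \<bar>a\<bar> > 0" using s by simp
  have g: "gfun \<sigma> a r = sgn a * \<sigma>\<^sup>2 * \<bar>a\<bar> * normal_density 0 (\<sigma> * \<bar>a\<bar>) r" for r
    using False normal_density_scale[OF False s, of r] by (auto simp: gfun_def sgn_if)
  have "(\<integral>r. normal_density 0 \<tau> r * gfun \<sigma> a r \<partial>lborel)
      = (\<integral>r. sgn a * \<sigma>\<^sup>2 * \<bar>a\<bar> * (normal_density 0 \<tau> r * normal_density 0 (\<sigma> * \<bar>a\<bar>) r) \<partial>lborel)"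
    by (simp add: g mult_ac)
  also have "\<dots> = sgn a * \<sigma>\<^sup>2 * \<bar>a\<bar> * (1 / sqrt (2 * pi * (\<tau>\<^sup>2 + (\<sigma> * \<bar>a\<bar>)\<^sup>2)))"
    using has_bochner_integral_integral_eq[OF prod_gauss[OF pa t]] by simp
  also have "\<dots> = a * \<sigma>\<^sup>2 / sqrt (2 * pi * (\<tau>\<^sup>2 + \<sigma>\<^sup>2 * a\<^sup>2))"
    using False by (auto simp: power_mult_distrib sgn_if)
  finally show ?thesis .
qed

lemma gauss2:
  assumes s: "\<sigma> > 0" and t: "\<tau> > 0"
  shows "integrable (lborel \<Otimes>\<^sub>M lborel) (\<lambda>(s, r). normal_density 0 \<sigma> s * normal_density 0 \<tau> r * (ind (a * s + r) * s))"
    and "(\<integral>(s, r). normal_density 0 \<sigma> s * normal_density 0 \<tau> r * (ind (a * s + r) * s) \<partial>(lborel \<Otimes>\<^sub>M lborel))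
          = a * \<sigma>\<^sup>2 / sqrt (2 * pi * (\<tau>\<^sup>2 + \<sigma>\<^sup>2 * a\<^sup>2))"
proof -
  let ?h = "\<lambda>(s::real, r::real). \<bar>s\<bar> * normal_density 0 \<sigma> s * normal_density 0 \<tau> r"
  have hint: "integrable (lborel \<Otimes>\<^sub>M lborel) ?h"
  proof (rule lborel_pair.Fubini_integrable)
    show "?h \<in> borel_measurable (lborel \<Otimes>\<^sub>M lborel)" by measurable
    have e: "(\<lambda>s. \<integral>r. norm (?h (s, r)) \<partial>lborel) = (\<lambda>s. normal_density 0 \<sigma> s * \<bar>s - 0\<bar> ^ 1)"
      by (auto simp: fun_eq_iff abs_mult integral_normal_density[OF t])
    show "integrable lborel (\<lambda>s. \<integral>r. norm (?h (s, r)) \<partial>lborel)"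
      unfolding e by (rule integrable_normal_moment_abs[OF s])
    show "AE s in lborel. integrable lborel (\<lambda>r. ?h (s, r))"
      using integrable_normal_density[OF t] by auto
  qed
  show int: "integrable (lborel \<Otimes>\<^sub>M lborel) (\<lambda>(s, r). normal_density 0 \<sigma> s * normal_density 0 \<tau> r * (ind (a * s + r) * s))"
  proof (rule Bochner_Integration.integrable_bound[OF hint])
    show "(\<lambda>(s, r). normal_density 0 \<sigma> s * normal_density 0 \<tau> r * (ind (a * s + r) * s)) \<in> borel_measurable (lborel \<Otimes>\<^sub>M lborel)"
      by measurable
    show "AE x in lborel \<Otimes>\<^sub>M lborel. norm ((\<lambda>(s, r). normal_density 0 \<sigma> s * normal_density 0 \<tau> r * (ind (a * s + r) * s)) x) \<le> norm (?h x)"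
      by (auto simp: ind_def abs_mult)
  qed
  have "(\<integral>(s, r). normal_density 0 \<sigma> s * normal_density 0 \<tau> r * (ind (a * s + r) * s) \<partial>(lborel \<Otimes>\<^sub>M lborel))
      = (\<integral>r. (\<integral>s. normal_density 0 \<sigma> s * normal_density 0 \<tau> r * (ind (a * s + r) * s) \<partial>lborel) \<partial>lborel)"
    using lborel_pair.integral_snd[OF int] by simp
  also have "\<dots> = (\<integral>r. normal_density 0 \<tau> r * gfun \<sigma> a r \<partial>lborel)"
  proof (rule Bochner_Integration.integral_cong[OF refl])
    fix r
    have "(\<integral>s. normal_density 0 \<sigma> s * normal_density 0 \<tau> r * (ind (a * s + r) * s) \<partial>lborel)
        = (\<integral>s. normal_density 0 \<tau> r * (ind (a * s + r) * s * normal_density 0 \<sigma> s) \<partial>lborel)"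
      by (simp add: mult_ac)
    also have "\<dots> = normal_density 0 \<tau> r * gfun \<sigma> a r"
      using inner_gen(2)[OF s, of a r] by simp
    finally show "(\<integral>s. normal_density 0 \<sigma> s * normal_density 0 \<tau> r * (ind (a * s + r) * s) \<partial>lborel) = normal_density 0 \<tau> r * gfun \<sigma> a r" .
  qed
  also have "\<dots> = a * \<sigma>\<^sup>2 / sqrt (2 * pi * (\<tau>\<^sup>2 + \<sigma>\<^sup>2 * a\<^sup>2))"
    by (rule outer_int[OF s t])
  finally show "(\<integral>(s, r). normal_density 0 \<sigma> s * normal_density 0 \<tau> r * (ind (a * s + r) * s) \<partial>(lborel \<Otimes>\<^sub>M lborel))
          = a * \<sigma>\<^sup>2 / sqrt (2 * pi * (\<tau>\<^sup>2 + \<sigma>\<^sup>2 * a\<^sup>2))" .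
qed



lemma (in prob_space) gauss_halfspace:
  fixes Wc :: "'p::finite \<Rightarrow> 'a \<Rightarrow> real" and y :: "real^'p"
  assumes c: "c > 0" and ind_W: "indep_vars (\<lambda>_. borel) Wc UNIV"
    and dW: "\<And>m. distributed M lborel (Wc m) (normal_density 0 c)"
    and y0: "y \<noteq> 0"
  shows "integrable M (\<lambda>\<omega>. ind (\<Sum>m\<in>UNIV. Wc m \<omega> * y$m) * Wc l \<omega>)
    \<and> expectation (\<lambda>\<omega>. ind (\<Sum>m\<in>UNIV. Wc m \<omega> * y$m) * Wc l \<omega>) = c * y$l / (norm y * sqrt (2*pi))"
proof -
  define a where "a = y$l"
  define I' where "I' = {m. m \<noteq> l \<and> y$m \<noteq> 0}"
  define R where "R = (\<lambda>\<omega>. \<Sum>m\<in>I'. y$m * Wc m \<omega>)"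
  define \<rho>2 where "\<rho>2 = (\<Sum>m\<in>I'. (y$m)\<^sup>2)"
  have Wm[measurable]: "Wc m \<in> borel_measurable M" for m
    using distributed_measurable[OF dW[of m]] by simp
  have sumeq: "(\<Sum>m\<in>UNIV. Wc m \<omega> * y$m) = a * Wc l \<omega> + R \<omega>" for \<omega>
  proof -
    have "(\<Sum>m\<in>UNIV. Wc m \<omega> * y$m) = Wc l \<omega> * y$l + (\<Sum>m\<in>UNIV-{l}. Wc m \<omega> * y$m)"
      by (subst sum.remove[of UNIV l]) auto
    moreover have "(\<Sum>m\<in>UNIV-{l}. Wc m \<omega> * y$m) = (\<Sum>m\<in>I'. Wc m \<omega> * y$m)"
      by (rule sum.mono_neutral_right) (auto simp: I'_def)
    ultimately show ?thesis by (simp add: a_def R_def mult.commute)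
  qed
  have normeq: "(norm y)\<^sup>2 = a\<^sup>2 + \<rho>2"
  proof -
    have "(norm y)\<^sup>2 = (\<Sum>m\<in>UNIV. (y$m)\<^sup>2)"
      unfolding power2_norm_eq_inner by (simp add: inner_vec_def power2_eq_square)
    also have "\<dots> = (y$l)\<^sup>2 + (\<Sum>m\<in>UNIV-{l}. (y$m)\<^sup>2)"
      by (subst sum.remove[of UNIV l]) auto
    also have "(\<Sum>m\<in>UNIV-{l}. (y$m)\<^sup>2) = \<rho>2"
      unfolding \<rho>2_def by (rule sum.mono_neutral_right) (auto simp: I'_def)
    finally show ?thesis by (simp add: a_def)
  qed
  have ny: "norm y > 0" using y0 by simp
  show ?thesis
  proof (cases "I' = {}")
    case True
    then have R0: "R = (\<lambda>_. 0)" by (simp add: R_def)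
    have "\<rho>2 = 0" using True by (simp add: \<rho>2_def)
    then have "(norm y)\<^sup>2 = a\<^sup>2" using normeq by simp
    then have nya: "norm y = \<bar>a\<bar>"
      by (metis norm_ge_zero real_sqrt_abs real_sqrt_unique)
    then have a0: "a \<noteq> 0" using ny by simp
    have e1: "(\<lambda>\<omega>. ind (\<Sum>m\<in>UNIV. Wc m \<omega> * y$m) * Wc l \<omega>) = (\<lambda>\<omega>. (\<lambda>s. ind (a * s + 0) * s) (Wc l \<omega>))"
      using sumeq R0 by auto
    have e2: "(\<lambda>x. normal_density 0 c x * (\<lambda>s. ind (a * s + 0) * s) x) = (\<lambda>x. ind (a * x + 0) * x * normal_density 0 c x)"
      by (auto simp: mult_ac)
    have int: "integrable M (\<lambda>\<omega>. ind (\<Sum>m\<in>UNIV. Wc m \<omega> * y$m) * Wc l \<omega>)"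
      unfolding e1 using distributed_integrable[OF dW[of l], of "\<lambda>s. ind (a * s + 0) * s"]
        inner_gen(1)[OF c, of a 0] unfolding e2 by simp
    have "expectation (\<lambda>\<omega>. ind (\<Sum>m\<in>UNIV. Wc m \<omega> * y$m) * Wc l \<omega>) = gfun c a 0"
      unfolding e1 using distributed_integral[OF dW[of l], of "\<lambda>s. ind (a * s + 0) * s"]
        inner_gen(2)[OF c, of a 0] unfolding e2 by simp
    also have "gfun c a 0 = c * y$l / (norm y * sqrt (2*pi))"
      using a0 c unfolding nya a_def[symmetric]
      by (auto simp: gfun_def normal_density_def real_sqrt_mult power2_eq_square field_simps)
    finally show ?thesis using int by simp
  next
    case False
    have finI: "finite I'" by simp
    have rho_pos: "\<rho>2 > 0" unfolding \<rho>2_def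
      using False by (intro sum_pos) (auto simp: I'_def)
    define \<tau> where "\<tau> = c * sqrt \<rho>2"
    have tau: "\<tau> > 0" using c rho_pos by (simp add: \<tau>_def)
    have ind_s: "indep_vars (\<lambda>_. borel) (\<lambda>m \<omega>. y$m * Wc m \<omega>) I'"
      by (rule indep_vars_compose2[OF indep_vars_subset[OF ind_W]]) auto
    have dS: "distributed M lborel (\<lambda>\<omega>. y$m * Wc m \<omega>) (normal_density 0 (\<bar>y$m\<bar> * c))" if "m \<in> I'" for m
      using normal_density_affine[OF dW[of m] c, of "y$m" 0] that by (simp add: I'_def)
    have "distributed M lborel (\<lambda>\<omega>. \<Sum>m\<in>I'. y$m * Wc m \<omega>) (normal_density (\<Sum>m\<in>I'. 0) (sqrt (\<Sum>m\<in>I'. (\<bar>y$m\<bar> * c)\<^sup>2)))"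
      by (rule sum_indep_normal[OF finI False ind_s]) (use c dS in \<open>auto simp: I'_def\<close>)
    moreover have "sqrt (\<Sum>m\<in>I'. (\<bar>y$m\<bar> * c)\<^sup>2) = \<tau>"
    proof -
      have "(\<Sum>m\<in>I'. (\<bar>y$m\<bar> * c)\<^sup>2) = c\<^sup>2 * \<rho>2"
        by (simp add: \<rho>2_def sum_distrib_left power_mult_distrib mult_ac)
      then show ?thesis using c by (simp add: \<tau>_def real_sqrt_mult)
    qed
    ultimately have dR: "distributed M lborel R (normal_density 0 \<tau>)"
      by (simp add: R_def)
    have iv: "indep_var (PiM {l} (\<lambda>_. borel)) (\<lambda>\<omega>. restrict (\<lambda>i. Wc i \<omega>) {l})
                        (PiM I' (\<lambda>_. borel)) (\<lambda>\<omega>. restrict (\<lambda>i. Wc i \<omega>) I')"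
      by (rule indep_var_restrict[OF ind_W]) (auto simp: I'_def)
    have "indep_var borel ((\<lambda>f. f l) \<circ> (\<lambda>\<omega>. restrict (\<lambda>i. Wc i \<omega>) {l}))
                    borel ((\<lambda>f. \<Sum>m\<in>I'. y$m * f m) \<circ> (\<lambda>\<omega>. restrict (\<lambda>i. Wc i \<omega>) I'))"
      by (rule indep_var_compose[OF iv]) auto
    moreover have "((\<lambda>f. f l) \<circ> (\<lambda>\<omega>. restrict (\<lambda>i. Wc i \<omega>) {l})) = Wc l" by auto
    moreover have "((\<lambda>f. \<Sum>m\<in>I'. y$m * f m) \<circ> (\<lambda>\<omega>. restrict (\<lambda>i. Wc i \<omega>) I')) = R"
      by (auto simp: R_def fun_eq_iff intro!: sum.cong)
    ultimately have indWR: "indep_var borel (Wc l) borel R" by simp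
    have sf: "sigma_finite_measure (lborel::real measure)" by (rule lborel.sigma_finite_measure_axioms)
    have dJ0: "distributed M (lborel \<Otimes>\<^sub>M lborel) (\<lambda>\<omega>. (Wc l \<omega>, R \<omega>))
        (\<lambda>(x, y). ennreal (normal_density 0 c x) * ennreal (normal_density 0 \<tau> y))"
      by (rule distributed_joint_indep[OF sf sf dW[of l] dR]) (use indWR in \<open>simp add: indep_var_eq\<close>)
    have eqd: "(\<lambda>(x, y). ennreal (normal_density 0 c x) * ennreal (normal_density 0 \<tau> y))
       = (\<lambda>p. ennreal ((\<lambda>(x, y). normal_density 0 c x * normal_density 0 \<tau> y) p))"
      by (auto simp: fun_eq_iff ennreal_mult)
    have dJ: "distributed M (lborel \<Otimes>\<^sub>M lborel) (\<lambda>\<omega>. (Wc l \<omega>, R \<omega>))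
        (\<lambda>p. ennreal ((\<lambda>(x, y). normal_density 0 c x * normal_density 0 \<tau> y) p))"
      using dJ0 unfolding eqd .
    let ?g = "\<lambda>(s, r). ind (a * s + r) * s"
    have e1: "(\<lambda>\<omega>. ind (\<Sum>m\<in>UNIV. Wc m \<omega> * y$m) * Wc l \<omega>) = (\<lambda>\<omega>. ?g (Wc l \<omega>, R \<omega>))"
      using sumeq by auto
    have e2: "(\<lambda>p. (\<lambda>(x, y). normal_density 0 c x * normal_density 0 \<tau> y) p * ?g p)
        = (\<lambda>(s, r). normal_density 0 c s * normal_density 0 \<tau> r * (ind (a * s + r) * s))"
      by (auto simp: fun_eq_iff)
    have gm: "?g \<in> borel_measurable (lborel \<Otimes>\<^sub>M lborel)" by measurable
    have int: "integrable M (\<lambda>\<omega>. ind (\<Sum>m\<in>UNIV. Wc m \<omega> * y$m) * Wc l \<omega>)"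
      unfolding e1 using distributed_integrable[OF dJ gm] gauss2(1)[OF c tau, of a]
      unfolding e2 by (auto split: prod.splits)
    have "expectation (\<lambda>\<omega>. ind (\<Sum>m\<in>UNIV. Wc m \<omega> * y$m) * Wc l \<omega>)
        = a * c\<^sup>2 / sqrt (2 * pi * (\<tau>\<^sup>2 + c\<^sup>2 * a\<^sup>2))"
      unfolding e1 using distributed_integral[OF dJ gm] gauss2(2)[OF c tau, of a]
      unfolding e2 by (auto split: prod.splits)
    also have "sqrt (2 * pi * (\<tau>\<^sup>2 + c\<^sup>2 * a\<^sup>2)) = c * sqrt (2 * pi) * norm y"
    proof (rule real_sqrt_unique)
      show "(c * sqrt (2 * pi) * norm y)\<^sup>2 = 2 * pi * (\<tau>\<^sup>2 + c\<^sup>2 * a\<^sup>2)"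
        using normeq rho_pos by (simp add: \<tau>_def power_mult_distrib algebra_simps)
      show "0 \<le> c * sqrt (2 * pi) * norm y" using c by simp
    qed
    also have "a * c\<^sup>2 / (c * sqrt (2 * pi) * norm y) = c * y$l / (norm y * sqrt (2*pi))"
      using c by (simp add: a_def power2_eq_square field_simps)
    finally show ?thesis using int by simp
  qed
qed



lemma interp_squares:
  fixes a :: "nat \<Rightarrow> real"
  assumes nn: "\<And>i. 0 \<le> a i"
    and lim: "(\<lambda>n. (\<Sum>i<(Suc n)\<^sup>2. a i) / real ((Suc n)\<^sup>2)) \<longlonglongrightarrow> \<mu>"
  shows "(\<lambda>N. (\<Sum>i<N. a i) / real N) \<longlonglongrightarrow> \<mu>"
proof -
  define T where "T N = (\<Sum>i<N. a i)" for N
  define u where "u n = T ((Suc n)\<^sup>2) / real ((Suc n)\<^sup>2)" for n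
  have u: "u \<longlonglongrightarrow> \<mu>" unfolding u_def T_def using lim .
  have Tmono: "T m \<le> T n" if "m \<le> n" for m n
    unfolding T_def using that nn by (intro sum_mono2) auto
  define s where "s N = floor_sqrt N" for N
  have s_top: "filterlim (\<lambda>N. s N - 1) at_top sequentially"
    unfolding filterlim_at_top eventually_sequentially
  proof
    fix Z show "\<exists>N0. \<forall>N\<ge>N0. Z \<le> s N - 1"
    proof (intro exI allI impI)
      fix N assume "(Suc Z)\<^sup>2 \<le> N"
      then have "Suc Z \<le> s N" unfolding s_def by (rule le_floor_sqrtI)
      then show "Z \<le> s N - 1" by simp
    qed
  qed
  have s_top': "filterlim s at_top sequentially"
    by (rule filterlim_at_top_mono[OF s_top]) auto
  have L1: "(\<lambda>N. u (s N - 1)) \<longlonglongrightarrow> \<mu>" by (rule filterlim_compose[OF u s_top])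
  have U1: "(\<lambda>N. u (s N)) \<longlonglongrightarrow> \<mu>" by (rule filterlim_compose[OF u s_top'])
  have r1: "(\<lambda>n. real (n\<^sup>2) / real ((Suc n)\<^sup>2)) \<longlonglongrightarrow> 1" by real_asymp
  have r2: "(\<lambda>n. real ((Suc n)\<^sup>2) / real (n\<^sup>2)) \<longlonglongrightarrow> 1" by real_asymp
  have L2: "(\<lambda>N. real ((s N)\<^sup>2) / real ((Suc (s N))\<^sup>2)) \<longlonglongrightarrow> 1" by (rule filterlim_compose[OF r1 s_top'])
  have U2: "(\<lambda>N. real ((Suc (s N))\<^sup>2) / real ((s N)\<^sup>2)) \<longlonglongrightarrow> 1" by (rule filterlim_compose[OF r2 s_top'])
  have Lo: "(\<lambda>N. u (s N - 1) * (real ((s N)\<^sup>2) / real ((Suc (s N))\<^sup>2))) \<longlonglongrightarrow> \<mu> * 1"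
    by (rule tendsto_mult[OF L1 L2])
  have Up: "(\<lambda>N. u (s N) * (real ((Suc (s N))\<^sup>2) / real ((s N)\<^sup>2))) \<longlonglongrightarrow> \<mu> * 1"
    by (rule tendsto_mult[OF U1 U2])
  have bounds: "u (s N - 1) * (real ((s N)\<^sup>2) / real ((Suc (s N))\<^sup>2)) \<le> T N / real N
      \<and> T N / real N \<le> u (s N) * (real ((Suc (s N))\<^sup>2) / real ((s N)\<^sup>2))" if N1: "N \<ge> 1" for N
  proof -
    define n where "n = s N"
    have n1: "n \<ge> 1" using N1 floor_sqrt_greater_zero_iff[of N] unfolding n_def s_def by linarith
    have nN: "n\<^sup>2 \<le> N" by (simp add: n_def s_def)
    have Nn: "N < (Suc n)\<^sup>2" unfolding n_def s_def by (rule Suc_floor_sqrt_power2_gt)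
    have T0: "0 \<le> T N" unfolding T_def using nn by (simp add: sum_nonneg)
    have npos: "real (n\<^sup>2) > 0" using n1 by simp
    have Npos: "real N > 0" using N1 by simp
    have "u (n - 1) = T (n\<^sup>2) / real (n\<^sup>2)" using n1 by (simp add: u_def)
    then have "u (n - 1) * (real (n\<^sup>2) / real ((Suc n)\<^sup>2)) = T (n\<^sup>2) / real ((Suc n)\<^sup>2)"
      using npos by simp
    also have "\<dots> \<le> T N / real ((Suc n)\<^sup>2)"
      by (rule divide_right_mono[OF Tmono[OF nN]]) simp
    also have "\<dots> \<le> T N / real N"
    proof (rule divide_left_mono[OF _ T0])
      show "real N \<le> real ((Suc n)\<^sup>2)" using Nn by linarith
      show "0 < real ((Suc n)\<^sup>2) * real N" using Npos by simp
    qed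
    finally have lo: "u (n - 1) * (real (n\<^sup>2) / real ((Suc n)\<^sup>2)) \<le> T N / real N" .
    have "T N / real N \<le> T N / real (n\<^sup>2)"
    proof (rule divide_left_mono[OF _ T0])
      show "real (n\<^sup>2) \<le> real N" using nN by linarith
      show "0 < real N * real (n\<^sup>2)" using Npos npos by simp
    qed
    also have "\<dots> \<le> T ((Suc n)\<^sup>2) / real (n\<^sup>2)"
      by (rule divide_right_mono[OF Tmono]) (use Nn in auto)
    also have "\<dots> = u n * (real ((Suc n)\<^sup>2) / real (n\<^sup>2))"
      by (simp add: u_def)
    finally have up: "T N / real N \<le> u n * (real ((Suc n)\<^sup>2) / real (n\<^sup>2))" .
    show ?thesis using lo up by (simp add: n_def)
  qed
  have "(\<lambda>N. T N / real N) \<longlonglongrightarrow> \<mu>"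
  proof (rule tendsto_sandwich[OF _ _ Lo[unfolded mult_1_right] Up[unfolded mult_1_right]])
    show "\<forall>\<^sub>F N in sequentially. u (s N - 1) * (real ((s N)\<^sup>2) / real ((Suc (s N))\<^sup>2)) \<le> T N / real N"
      unfolding eventually_sequentially using bounds by blast
    show "\<forall>\<^sub>F N in sequentially. T N / real N \<le> u (s N) * (real ((Suc (s N))\<^sup>2) / real ((s N)\<^sup>2))"
      unfolding eventually_sequentially using bounds by blast
  qed
  then show ?thesis by (simp add: T_def)
qed


lemma (in prob_space) var_sum_bound:
  fixes X :: "nat \<Rightarrow> 'a \<Rightarrow> real"
  assumes meas[measurable]: "\<And>i. X i \<in> borel_measurable M"
    and ind2: "\<And>i j. i \<noteq> j \<Longrightarrow> indep_var borel (X i) borel (X j)"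
    and sq: "\<And>i. integrable M (\<lambda>\<omega>. (X i \<omega>)\<^sup>2)"
    and bnd: "\<And>i. expectation (\<lambda>\<omega>. (X i \<omega>)\<^sup>2) \<le> B"
    and mean: "\<And>i. expectation (X i) = \<mu>"
  shows "integrable M (\<lambda>\<omega>. ((\<Sum>i<N. X i \<omega>) - real N * \<mu>)\<^sup>2)
     \<and> expectation (\<lambda>\<omega>. ((\<Sum>i<N. X i \<omega>) - real N * \<mu>)\<^sup>2) \<le> real N * B"
proof -
  define Y where "Y = (\<lambda>i \<omega>. X i \<omega> - \<mu>)"
  have intX: "integrable M (X i)" for i
    by (rule square_integrable_imp_integrable[OF meas sq])
  have intY: "integrable M (Y i)" for i
    unfolding Y_def using intX by simp
  have EY: "expectation (Y i) = 0" for i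
    unfolding Y_def using intX mean by (simp add: prob_space)
  have Ysq: "(\<lambda>\<omega>. Y i \<omega> * Y i \<omega>) = (\<lambda>\<omega>. (X i \<omega>)\<^sup>2 - 2 * \<mu> * X i \<omega> + \<mu>\<^sup>2)" for i
    by (auto simp: Y_def power2_eq_square algebra_simps)
  have intYY: "integrable M (\<lambda>\<omega>. Y a \<omega> * Y b \<omega>)" for a b
  proof (cases "a = b")
    case True
    show ?thesis unfolding True Ysq using sq intX by simp
  next
    case False
    have "indep_var borel ((\<lambda>x. x - \<mu>) \<circ> X a) borel ((\<lambda>x. x - \<mu>) \<circ> X b)"
      by (rule indep_var_compose[OF ind2[OF False]]) auto
    then have "indep_var borel (Y a) borel (Y b)" by (simp add: Y_def o_def)
    then show ?thesis using intY by (intro indep_var_integrable)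
  qed
  have EYY: "expectation (\<lambda>\<omega>. Y a \<omega> * Y b \<omega>) = (if a = b then expectation (\<lambda>\<omega>. (X a \<omega>)\<^sup>2) - \<mu>\<^sup>2 else 0)" for a b
  proof (cases "a = b")
    case True
    have "expectation (\<lambda>\<omega>. Y a \<omega> * Y a \<omega>) = expectation (\<lambda>\<omega>. (X a \<omega>)\<^sup>2) - 2 * \<mu> * expectation (X a) + \<mu>\<^sup>2"
      unfolding Ysq using sq intX by (simp add: prob_space)
    then show ?thesis using True mean by (simp add: power2_eq_square)
  next
    case False
    have "indep_var borel ((\<lambda>x. x - \<mu>) \<circ> X a) borel ((\<lambda>x. x - \<mu>) \<circ> X b)"
      by (rule indep_var_compose[OF ind2[OF False]]) auto
    then have "indep_var borel (Y a) borel (Y b)" by (simp add: Y_def o_def)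
    then have "expectation (\<lambda>\<omega>. Y a \<omega> * Y b \<omega>) = expectation (Y a) * expectation (Y b)"
      using intY by (intro indep_var_lebesgue_integral)
    then show ?thesis using False EY by simp
  qed
  have eqS: "((\<Sum>i<N. X i \<omega>) - real N * \<mu>)\<^sup>2 = (\<Sum>a<N. \<Sum>b<N. Y a \<omega> * Y b \<omega>)" for \<omega>
  proof -
    have "(\<Sum>i<N. X i \<omega>) - real N * \<mu> = (\<Sum>i<N. Y i \<omega>)"
      by (simp add: Y_def sum_subtractf)
    then show ?thesis by (simp add: power2_eq_square sum_product)
  qed
  have int: "integrable M (\<lambda>\<omega>. ((\<Sum>i<N. X i \<omega>) - real N * \<mu>)\<^sup>2)"
    unfolding eqS using intYY by auto
  have "expectation (\<lambda>\<omega>. ((\<Sum>i<N. X i \<omega>) - real N * \<mu>)\<^sup>2)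
      = (\<Sum>a<N. \<Sum>b<N. expectation (\<lambda>\<omega>. Y a \<omega> * Y b \<omega>))"
    unfolding eqS using intYY by (simp add: integral_sum integrable_sum)
  also have "\<dots> = (\<Sum>a<N. expectation (\<lambda>\<omega>. (X a \<omega>)\<^sup>2) - \<mu>\<^sup>2)"
    unfolding EYY by (simp add: sum.delta)
  also have "\<dots> \<le> (\<Sum>a<N. B)"
    by (rule sum_mono) (use bnd in \<open>smt (verit) zero_le_power2\<close>)
  also have "\<dots> = real N * B" by simp
  finally show ?thesis using int by simp
qed


lemma (in prob_space) slln_pw:
  fixes X :: "nat \<Rightarrow> 'a \<Rightarrow> real"
  assumes meas[measurable]: "\<And>i. X i \<in> borel_measurable M"
    and nn: "\<And>i \<omega>. 0 \<le> X i \<omega>"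
    and ind2: "\<And>i j. i \<noteq> j \<Longrightarrow> indep_var borel (X i) borel (X j)"
    and sq: "\<And>i. integrable M (\<lambda>\<omega>. (X i \<omega>)\<^sup>2)"
    and bnd: "\<And>i. expectation (\<lambda>\<omega>. (X i \<omega>)\<^sup>2) \<le> B"
    and mean: "\<And>i. expectation (X i) = \<mu>"
  shows "AE \<omega> in M. (\<lambda>N. (\<Sum>i<N. X i \<omega>) / real N) \<longlonglongrightarrow> \<mu>"
proof -
  define S where "S N \<omega> = (\<Sum>i<N. X i \<omega>)" for N \<omega>
  have Sm[measurable]: "S N \<in> borel_measurable M" for N unfolding S_def by measurable
  have intX: "integrable M (X i)" for i
    by (rule square_integrable_imp_integrable[OF meas sq])
  have B0: "0 \<le> B"
  proof -
    have "0 \<le> expectation (\<lambda>\<omega>. (X 0 \<omega>)\<^sup>2)" by (rule integral_nonneg_AE) simp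
    then show ?thesis using bnd[of 0] by linarith
  qed
  have cheb: "prob {\<omega> \<in> space M. \<epsilon> \<le> \<bar>S N \<omega> / real N - \<mu>\<bar>} \<le> B / (real N * \<epsilon>\<^sup>2)"
    if e: "\<epsilon> > 0" and N: "N > 0" for \<epsilon> N
  proof -
    note vb = var_sum_bound[OF meas ind2 sq bnd mean, where N=N]
    have ES: "expectation (S N) = real N * \<mu>"
      unfolding S_def using intX mean by (simp add: integral_sum)
    have sqS: "integrable M (\<lambda>\<omega>. (S N \<omega>)\<^sup>2)"
    proof -
      have "(\<lambda>\<omega>. (S N \<omega>)\<^sup>2) = (\<lambda>\<omega>. ((\<Sum>i<N. X i \<omega>) - real N * \<mu>)\<^sup>2 + 2 * (real N * \<mu>) * S N \<omega> - (real N * \<mu>)\<^sup>2)"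
        by (auto simp: S_def power2_eq_square algebra_simps)
      moreover have "integrable M (S N)" unfolding S_def using intX by auto
      ultimately show ?thesis using vb by simp
    qed
    have Npos: "real N > 0" using N by simp
    have "{\<omega> \<in> space M. \<epsilon> \<le> \<bar>S N \<omega> / real N - \<mu>\<bar>} = {\<omega> \<in> space M. \<epsilon> * real N \<le> \<bar>S N \<omega> - expectation (S N)\<bar>}"
    proof -
      have "\<bar>S N \<omega> / real N - \<mu>\<bar> = \<bar>S N \<omega> - real N * \<mu>\<bar> / real N" for \<omega>
        using Npos by (simp add: field_simps abs_divide)
      then show ?thesis using Npos unfolding ES by (auto simp: field_simps)
    qed
    also have "prob \<dots> \<le> variance (S N) / (\<epsilon> * real N)\<^sup>2"
      by (rule Chebyshev_inequality[OF Sm sqS]) (use e Npos in simp)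
    also have "variance (S N) = expectation (\<lambda>\<omega>. ((\<Sum>i<N. X i \<omega>) - real N * \<mu>)\<^sup>2)"
      unfolding ES by (simp add: S_def)
    also have "\<dots> / (\<epsilon> * real N)\<^sup>2 \<le> real N * B / (\<epsilon> * real N)\<^sup>2"
      by (rule divide_right_mono) (use vb in auto)
    also have "real N * B / (\<epsilon> * real N)\<^sup>2 = B / (real N * \<epsilon>\<^sup>2)"
      using Npos e by (simp add: power2_eq_square field_simps)
    finally show ?thesis .
  qed
  have ev: "AE \<omega> in M. \<forall>m::nat. eventually (\<lambda>n. \<bar>S ((Suc n)\<^sup>2) \<omega> / real ((Suc n)\<^sup>2) - \<mu>\<bar> < 1 / real (Suc m)) sequentially"
    unfolding AE_all_countable
  proof
    fix m :: nat
    define \<epsilon> where "\<epsilon> = 1 / real (Suc m)"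
    have e: "\<epsilon> > 0" by (simp add: \<epsilon>_def)
    define A where "A n = {\<omega> \<in> space M. \<epsilon> \<le> \<bar>S ((Suc n)\<^sup>2) \<omega> / real ((Suc n)\<^sup>2) - \<mu>\<bar>}" for n
    have Am[measurable]: "A n \<in> sets M" for n unfolding A_def by measurable
    have "summable (\<lambda>n. measure M (A n))"
    proof (rule summable_comparison_test')
      have "summable (\<lambda>n. inverse (real (Suc n) ^ 2))"
        using inverse_power_summable[of 2, where 'a=real] summable_Suc_iff[of "\<lambda>n. inverse (real n ^ 2)"] by simp
      then show "summable (\<lambda>n. B / \<epsilon>\<^sup>2 * inverse (real (Suc n) ^ 2))"
        by (rule summable_mult)
      fix n :: nat
      have "measure M (A n) \<le> B / (real ((Suc n)\<^sup>2) * \<epsilon>\<^sup>2)"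
        unfolding A_def by (rule cheb[OF e]) simp
      also have "\<dots> = B / \<epsilon>\<^sup>2 * inverse (real (Suc n) ^ 2)"
        by (simp add: field_simps)
      finally show "norm (measure M (A n)) \<le> B / \<epsilon>\<^sup>2 * inverse (real (Suc n) ^ 2)" by simp
    qed
    then have "AE \<omega> in M. eventually (\<lambda>n. \<omega> \<in> space M - A n) sequentially"
      by (intro borel_cantelli_AE1) (auto simp: emeasure_eq_measure)
    then show "AE \<omega> in M. eventually (\<lambda>n. \<bar>S ((Suc n)\<^sup>2) \<omega> / real ((Suc n)\<^sup>2) - \<mu>\<bar> < 1 / real (Suc m)) sequentially"
      by (rule AE_mp) (auto simp: A_def \<epsilon>_def not_le elim: eventually_mono)
  qed
  show ?thesis
  proof (rule AE_mp[OF ev], rule AE_I2, intro impI)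
    fix \<omega> assume H: "\<forall>m::nat. eventually (\<lambda>n. \<bar>S ((Suc n)\<^sup>2) \<omega> / real ((Suc n)\<^sup>2) - \<mu>\<bar> < 1 / real (Suc m)) sequentially"
    have "(\<lambda>n. (\<Sum>i<(Suc n)\<^sup>2. X i \<omega>) / real ((Suc n)\<^sup>2)) \<longlonglongrightarrow> \<mu>"
    proof (rule LIMSEQ_I)
      fix r :: real assume r: "0 < r"
      obtain m where m: "inverse (real (Suc m)) < r"
        using reals_Archimedean[OF r] by blast
      then have m: "1 / real (Suc m) < r" by (simp add: divide_inverse)
      from H[rule_format, of m] obtain n0 where
        hyp: "\<forall>n\<ge>n0. \<bar>S ((Suc n)\<^sup>2) \<omega> / real ((Suc n)\<^sup>2) - \<mu>\<bar> < 1 / real (Suc m)"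
        unfolding eventually_sequentially by blast
      show "\<exists>no. \<forall>n\<ge>no. norm ((\<Sum>i<(Suc n)\<^sup>2. X i \<omega>) / real ((Suc n)\<^sup>2) - \<mu>) < r"
      proof (intro exI[of _ n0] allI impI)
        fix n assume "n0 \<le> n"
        with hyp have "\<bar>S ((Suc n)\<^sup>2) \<omega> / real ((Suc n)\<^sup>2) - \<mu>\<bar> < 1 / real (Suc m)" by blast
        then show "norm ((\<Sum>i<(Suc n)\<^sup>2. X i \<omega>) / real ((Suc n)\<^sup>2) - \<mu>) < r"
          using m unfolding S_def real_norm_def by linarith
      qed
    qed
    then show "(\<lambda>N. (\<Sum>i<N. X i \<omega>) / real N) \<longlonglongrightarrow> \<mu>"
      by (rule interp_squares[rotated]) (rule nn)
  qed
qed



lemma (in prob_space) indep_vars_reindex: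
  assumes ind: "indep_vars M' X (f ` I)" and inj: "inj_on f I"
  shows "indep_vars (\<lambda>i. M' (f i)) (\<lambda>i. X (f i)) I"
proof -
  have rv: "\<forall>i\<in>f ` I. random_variable (M' i) (X i)"
    and isets: "indep_sets (\<lambda>i. sigma_sets (space M) {X i -` A \<inter> space M |A. A \<in> sets (M' i)}) (f ` I)"
    using ind unfolding indep_vars_def by auto
  show ?thesis unfolding indep_vars_def
  proof (intro conjI ballI)
    fix i assume "i \<in> I" then show "random_variable (M' (f i)) (X (f i))" using rv by auto
  next
    show "indep_sets (\<lambda>i. sigma_sets (space M) {X (f i) -` A \<inter> space M |A. A \<in> sets (M' (f i))}) I"
      unfolding indep_sets_def
    proof (intro conjI ballI allI impI)
      fix i assume "i \<in> I"
      then show "sigma_sets (space M) {X (f i) -` A \<inter> space M |A. A \<in> sets (M' (f i))} \<subseteq> events"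
        using isets unfolding indep_sets_def by auto
    next
      fix J A assume J: "J \<subseteq> I" "J \<noteq> {}" "finite J"
        and A: "A \<in> (\<Pi> j\<in>J. sigma_sets (space M) {X (f j) -` A \<inter> space M |A. A \<in> sets (M' (f j))})"
      define A' where "A' = (\<lambda>z. A (the_inv_into J f z))"
      have injJ: "inj_on f J" using inj J by (auto intro: inj_on_subset)
      have tA: "the_inv_into J f (f j) = j" if "j \<in> J" for j
        using the_inv_into_f_f[OF injJ that] .
      have H: "\<forall>J'\<subseteq>f ` I. J' \<noteq> {} \<longrightarrow> finite J' \<longrightarrow> (\<forall>A\<in>Pi J' (\<lambda>i. sigma_sets (space M) {X i -` A \<inter> space M |A. A \<in> sets (M' i)}).
          prob (\<Inter>j\<in>J'. A j) = (\<Prod>j\<in>J'. prob (A j)))"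
        using isets unfolding indep_sets_def by blast
      have A'P: "A' \<in> (\<Pi> z\<in>f ` J. sigma_sets (space M) {X z -` A \<inter> space M |A. A \<in> sets (M' z)})"
        using A by (auto simp: A'_def tA)
      have "prob (\<Inter>z\<in>f ` J. A' z) = (\<Prod>z\<in>f ` J. prob (A' z))"
        using H[rule_format, of "f ` J" A'] J A'P by auto
      moreover have "(\<Inter>z\<in>f ` J. A' z) = (\<Inter>j\<in>J. A j)" by (auto simp: A'_def tA)
      moreover have "(\<Prod>z\<in>f ` J. prob (A' z)) = (\<Prod>j\<in>J. prob (A j))"
        by (simp add: prod.reindex[OF injJ] A'_def tA)
      ultimately show "prob (\<Inter>j\<in>J. A j) = (\<Prod>j\<in>J. prob (A j))" by simp
    qed
  qed
qed

lemma (in prob_space) normal_facts: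
  assumes c: "c > 0" and dV: "distributed M lborel V (normal_density 0 c)"
  shows "integrable M V" "expectation V = 0"
    "integrable M (\<lambda>\<omega>. \<bar>V \<omega>\<bar>)" "expectation (\<lambda>\<omega>. \<bar>V \<omega>\<bar>) = c * sqrt (2 / pi)"
    "integrable M (\<lambda>\<omega>. (V \<omega>)\<^sup>2)" "expectation (\<lambda>\<omega>. (V \<omega>)\<^sup>2) = c\<^sup>2"
    "integrable M (\<lambda>\<omega>. relu (V \<omega>))" "expectation (\<lambda>\<omega>. relu (V \<omega>)) = c / sqrt (2 * pi)"
proof -
  have Vm[measurable]: "V \<in> borel_measurable M" using distributed_measurable[OF dV] by simp
  have i1: "integrable lborel (\<lambda>x. normal_density 0 c x * x)"
    using integrable_normal_moment[OF c, of 0 1] by simp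
  show iV: "integrable M V"
    using distributed_integrable[OF dV, of "\<lambda>x. x"] i1 by simp
  show eV: "expectation V = 0" by (rule normal_distributed_expectation[OF c dV])
  have i2: "integrable lborel (\<lambda>x. normal_density 0 c x * \<bar>x\<bar>)"
    using integrable_normal_moment_abs[OF c, of 0 1] by simp
  show iA: "integrable M (\<lambda>\<omega>. \<bar>V \<omega>\<bar>)"
    using distributed_integrable[OF dV, of "\<lambda>x. \<bar>x\<bar>"] i2 by simp
  show eA: "expectation (\<lambda>\<omega>. \<bar>V \<omega>\<bar>) = c * sqrt (2 / pi)"
    using distributed_integral[OF dV, of "\<lambda>x. \<bar>x\<bar>"] integral_normal_moment_abs_odd[OF c, of 0 0] by simp
  have i3: "integrable lborel (\<lambda>x. normal_density 0 c x * x\<^sup>2)"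
    using integrable_normal_moment[OF c, of 0 2] by simp
  show "integrable M (\<lambda>\<omega>. (V \<omega>)\<^sup>2)"
    using distributed_integrable[OF dV, of "\<lambda>x. x\<^sup>2"] i3 by simp
  show "expectation (\<lambda>\<omega>. (V \<omega>)\<^sup>2) = c\<^sup>2"
    using distributed_integral[OF dV, of "\<lambda>x. x\<^sup>2"] integral_normal_moment_even[OF c, of 0 1] by simp
  have re: "(\<lambda>\<omega>. relu (V \<omega>)) = (\<lambda>\<omega>. (V \<omega> + \<bar>V \<omega>\<bar>) / 2)"
    by (auto simp: relu_def fun_eq_iff max_def)
  show "integrable M (\<lambda>\<omega>. relu (V \<omega>))" unfolding re using iV iA by simp
  have "expectation (\<lambda>\<omega>. relu (V \<omega>)) = c * sqrt (2 / pi) / 2"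
    unfolding re using iV iA eV eA by simp
  also have "\<dots> = c / sqrt (2 * pi)"
  proof -
    have "sqrt (2 / pi) * sqrt (2 * pi) = 2"
      by (simp add: real_sqrt_mult[symmetric])
    then show ?thesis by (simp add: field_simps)
  qed
  finally show "expectation (\<lambda>\<omega>. relu (V \<omega>)) = c / sqrt (2 * pi)" .
qed

lemma sum_matrix_vector: "(\<Sum>j\<in>S. A j) *v x = (\<Sum>j\<in>S. A j *v x)"
  by (induct S rule: infinite_finite_induct) (simp_all add: matrix_vector_mult_add_rdistrib)

lemma mat_vector: "mat (a::real) *v x = a *\<^sub>R x"
  by (simp add: vec_eq_iff matrix_vector_mult_def mat_def if_distrib if_distribR sum.delta cong: if_cong)



lemma sum_shift1: "(\<Sum>i\<in>{1..N}. f i) = (\<Sum>n<N. f (Suc n))"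
  by (induct N) (simp_all add: sum.cl_ivl_Suc)

lemma comp_meas_PiM[measurable]:
  "x \<in> I \<Longrightarrow> (\<lambda>f. f x) \<in> borel_measurable (PiM I (\<lambda>_. borel))"
  by (rule measurable_component_singleton)

lemma (in prob_space) indep_restrict_fun:
  assumes ind: "indep_vars (\<lambda>_. borel) Z IS" and K: "K1 \<inter> K2 = {}" "K1 \<subseteq> IS" "K2 \<subseteq> IS"
    and F1: "F1 \<in> borel_measurable (PiM K1 (\<lambda>_. borel))" and F2: "F2 \<in> borel_measurable (PiM K2 (\<lambda>_. borel))"
  shows "indep_var borel (\<lambda>\<omega>. F1 (restrict (\<lambda>z. Z z \<omega>) K1)) borel (\<lambda>\<omega>. F2 (restrict (\<lambda>z. Z z \<omega>) K2))"
proof -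
  have "indep_var (PiM K1 (\<lambda>_. borel)) (\<lambda>\<omega>. restrict (\<lambda>z. Z z \<omega>) K1) (PiM K2 (\<lambda>_. borel)) (\<lambda>\<omega>. restrict (\<lambda>z. Z z \<omega>) K2)"
    by (rule indep_var_restrict[OF ind K])
  from indep_var_compose[OF this F1 F2] show ?thesis by (simp add: o_def)
qed


lemma relu_abs: "\<bar>relu v\<bar> \<le> \<bar>v\<bar>" and relu_nonneg: "0 \<le> relu v"
  by (auto simp: relu_def)

lemma ind_01: "ind t = 0 \<or> ind t = 1"
  by (auto simp: ind_def)

lemma pim_comp:
  "x \<in> K \<Longrightarrow> (\<lambda>f. f x) \<in> borel_measurable (PiM K (\<lambda>_. borel))"
  by (rule measurable_component_singleton)

lemmas meas_intros = borel_measurable_add borel_measurable_times measurable_compose[OF _ relu_measurable]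
        measurable_compose[OF _ ind_measurable] borel_measurable_sum borel_measurable_abs borel_measurable_power
        borel_measurable_const

lemma (in prob_space) main_jl:
  fixes Wv :: "nat \<Rightarrow> 'a \<Rightarrow> real^'p" and Vs :: "nat \<Rightarrow> 'a \<Rightarrow> real" and y :: "real^'p"
  assumes c: "c > 0" and y0: "y \<noteq> 0"
    and dW: "\<And>i m. i \<ge> 1 \<Longrightarrow> distributed M lborel (\<lambda>\<omega>. Wv i \<omega> $ m) (normal_density 0 c)"
    and dV: "\<And>i. i \<ge> 1 \<Longrightarrow> distributed M lborel (Vs i) (normal_density 0 c)"
    and indA: "indep_vars (\<lambda>_. borel) (\<lambda>z. case z of Inl (i, m) \<Rightarrow> (\<lambda>\<omega>. Wv i \<omega> $ m) | Inr i \<Rightarrow> Vs i)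
                 ({Inl (i, m) | i m. i \<ge> 1} \<union> {Inr i | i. i \<ge> 1})"
  shows "AE \<omega> in M. (\<lambda>N. (\<Sum>n<N. relu (Vs (Suc n) \<omega>) * ind (\<Sum>m\<in>UNIV. Wv (Suc n) \<omega> $ m * y $ m) * Wv (Suc n) \<omega> $ l) / real N)
            \<longlonglongrightarrow> c\<^sup>2 / (2 * pi * norm y) * y $ l"
proof -
  define Z where "Z = (\<lambda>z. case z of Inl (i, m) \<Rightarrow> (\<lambda>\<omega>. Wv i \<omega> $ m) | Inr i \<Rightarrow> Vs i)"
  define IS :: "((nat \<times> 'p) + nat) set" where "IS = {Inl (i, m) | i m. i \<ge> 1} \<union> {Inr i | i. i \<ge> 1}"
  have ind: "indep_vars (\<lambda>_. borel) Z IS" using indA by (simp add: Z_def IS_def)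
  define s where "s i \<omega> = (\<Sum>m\<in>UNIV. Wv i \<omega> $ m * y $ m)" for i \<omega>
  define KW where "KW i = range (\<lambda>m::'p. Inl (i, m) :: (nat \<times> 'p) + nat)" for i
  define G where "G i = insert (Inr i) (KW i)" for i
  have KW_IS: "KW i \<subseteq> IS" if "i \<ge> 1" for i using that by (auto simp: KW_def IS_def)
  have G_IS: "G i \<subseteq> IS" if "i \<ge> 1" for i using that by (auto simp: G_def KW_def IS_def)
  have Gdisj: "G i \<inter> G i' = {}" if "i \<noteq> i'" for i i' using that by (auto simp: G_def KW_def)
  have KWdisj: "{Inr i} \<inter> KW i = {}" for i by (auto simp: KW_def)
  have Ri_IS: "{Inr i} \<subseteq> IS" if "i \<ge> 1" for i using that by (auto simp: IS_def)
  have Wm: "(\<lambda>\<omega>. Wv (Suc n) \<omega> $ m) \<in> borel_measurable M" for n m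
  proof -
    have "1 \<le> Suc n" by simp
    from distributed_measurable[OF dW[OF this]] show ?thesis by (simp only: measurable_lborel1)
  qed
  have Vm: "Vs (Suc n) \<in> borel_measurable M" for n
  proof -
    have "1 \<le> Suc n" by simp
    from distributed_measurable[OF dV[OF this]] show ?thesis by (simp only: measurable_lborel1)
  qed
  note Wm[measurable] Vm[measurable]
  have cm1[measurable]: "(\<lambda>f. f (Inr i)) \<in> borel_measurable (PiM (G i) (\<lambda>_. borel))" for i
    by (rule measurable_component_singleton) (simp add: G_def)
  have cm2[measurable]: "(\<lambda>f. f (Inl (i, m))) \<in> borel_measurable (PiM (G i) (\<lambda>_. borel))" for i m
    by (rule measurable_component_singleton) (simp add: G_def KW_def)
  have cm3[measurable]: "(\<lambda>f. f (Inr i)) \<in> borel_measurable (PiM {Inr i} (\<lambda>_. borel))" for i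
    by (rule measurable_component_singleton) simp
  have cm4[measurable]: "(\<lambda>f. f (Inl (i, m))) \<in> borel_measurable (PiM (KW i) (\<lambda>_. borel))" for i m
    by (rule measurable_component_singleton) (simp add: KW_def)
  have rG1: "restrict (\<lambda>z. Z z \<omega>) (G i) (Inr i) = Vs i \<omega>" for i \<omega> by (simp add: G_def Z_def)
  have rG2: "restrict (\<lambda>z. Z z \<omega>) (G i) (Inl (i, m)) = Wv i \<omega> $ m" for i m \<omega> by (simp add: G_def KW_def Z_def)
  have rK1: "restrict (\<lambda>z. Z z \<omega>) {Inr i} (Inr i) = Vs i \<omega>" for i \<omega> by (simp add: Z_def)
  have rK2: "restrict (\<lambda>z. Z z \<omega>) (KW i) (Inl (i, m)) = Wv i \<omega> $ m" for i m \<omega> by (simp add: KW_def Z_def)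
  have indWc: "indep_vars (\<lambda>_. borel) (\<lambda>m \<omega>. Wv i \<omega> $ m) UNIV" if "i \<ge> 1" for i
  proof -
    have sub: "indep_vars (\<lambda>_. borel) Z ((\<lambda>m. Inl (i, m)) ` UNIV)"
      using indep_vars_subset[OF ind KW_IS[OF that]] by (simp add: KW_def)
    have inj: "inj_on (\<lambda>m. Inl (i, m) :: (nat \<times> 'p) + nat) UNIV" by (rule inj_onI) simp
    have eqZ: "(\<lambda>m. Z (Inl (i, m))) = (\<lambda>m \<omega>. Wv i \<omega> $ m)" by (rule ext) (simp add: Z_def)
    have "indep_vars (\<lambda>_. borel) (\<lambda>m. Z (Inl (i, m))) UNIV" by (rule indep_vars_reindex[OF sub inj])
    then show ?thesis by (simp only: eqZ)
  qed
  have indVW: "indep_var borel (\<lambda>\<omega>. F1 (Vs i \<omega>)) borel (\<lambda>\<omega>. F2 (Wv i \<omega>))"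
    if "i \<ge> 1" and [measurable]: "F1 \<in> borel_measurable borel"
      and F2m: "(\<lambda>f. F2 (\<chi> m. f (Inl (i, m)))) \<in> borel_measurable (PiM (KW i) (\<lambda>_. borel))" for i F1 F2
  proof -
    have "indep_var borel (\<lambda>\<omega>. (\<lambda>f. F1 (f (Inr i))) (restrict (\<lambda>z. Z z \<omega>) {Inr i}))
         borel (\<lambda>\<omega>. (\<lambda>f. F2 (\<chi> m. f (Inl (i, m)))) (restrict (\<lambda>z. Z z \<omega>) (KW i)))"
      by (rule indep_restrict_fun[OF ind KWdisj Ri_IS[OF that(1)] KW_IS[OF that(1)] measurable_compose[OF cm3 that(2)] F2m])
    moreover have "(\<chi> m. restrict (\<lambda>z. Z z \<omega>) (KW i) (Inl (i, m))) = Wv i \<omega>" for \<omega>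
      by (simp add: vec_eq_iff KW_def Z_def)
    ultimately show ?thesis by (simp add: Z_def)
  qed
  define mr where "mr = c / sqrt (2*pi)"
  define gl where "gl = c * y$l / (norm y * sqrt (2*pi))"
  define ma where "ma = c * sqrt (2/pi)"
  define Xf where "Xf i \<omega> = relu (Vs i \<omega>) * ind (s i \<omega>) * Wv i \<omega> $ l" for i \<omega>
  define Bf where "Bf i \<omega> = relu (Vs i \<omega>) * \<bar>Wv i \<omega> $ l\<bar>" for i \<omega>
  define Af where "Af i \<omega> = relu (Vs i \<omega>) * ind (s i \<omega>) * Wv i \<omega> $ l + relu (Vs i \<omega>) * \<bar>Wv i \<omega> $ l\<bar>" for i \<omega>
  define FA where "FA i f = relu (f (Inr i)) * ind (\<Sum>m\<in>UNIV. f (Inl (i, m)) * y $ m) * f (Inl (i, l))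
        + relu (f (Inr i)) * \<bar>f (Inl (i, l))\<bar>" for i and f :: "((nat \<times> 'p) + nat) \<Rightarrow> real"
  define FB where "FB i f = relu (f (Inr i)) * \<bar>f (Inl (i, l))\<bar>" for i and f :: "((nat \<times> 'p) + nat) \<Rightarrow> real"
  have inG1: "Inr i \<in> G i" for i by (simp add: G_def)
  have inG2: "Inl (i, m) \<in> G i" for i m by (simp add: G_def KW_def)
  have inK2: "Inl (i, m) \<in> KW i" for i m by (simp add: KW_def)
  have mFA: "FA i \<in> borel_measurable (PiM (G i) (\<lambda>_. borel))" for i
    unfolding FA_def by (intro meas_intros pim_comp inG1 inG2)
  have mFB: "FB i \<in> borel_measurable (PiM (G i) (\<lambda>_. borel))" for i
    unfolding FB_def by (intro meas_intros pim_comp inG1 inG2)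
  have eqA: "Af i = (\<lambda>\<omega>. FA i (restrict (\<lambda>z. Z z \<omega>) (G i)))" for i
    by (rule ext) (simp add: Af_def FA_def Z_def inG1 inG2 s_def)
  have eqB: "Bf i = (\<lambda>\<omega>. FB i (restrict (\<lambda>z. Z z \<omega>) (G i)))" for i
    by (rule ext) (simp add: Bf_def FB_def Z_def inG1 inG2)
  have AfX: "Af i \<omega> = Xf i \<omega> + Bf i \<omega>" for i \<omega> by (simp add: Af_def Xf_def Bf_def)
  have Wm': "(\<lambda>\<omega>. Wv i \<omega> $ m) \<in> borel_measurable M" if "i \<ge> 1" for i m
    using distributed_measurable[OF dW[OF that]] by (simp only: measurable_lborel1)
  have Vm': "Vs i \<in> borel_measurable M" if "i \<ge> 1" for i
    using distributed_measurable[OF dV[OF that]] by (simp only: measurable_lborel1)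
  have mA: "Af i \<in> borel_measurable M" if "i \<ge> 1" for i
    unfolding Af_def s_def by (intro meas_intros Wm'[OF that] Vm'[OF that])
  have mB: "Bf i \<in> borel_measurable M" if "i \<ge> 1" for i
    unfolding Bf_def by (intro meas_intros Wm'[OF that] Vm'[OF that])
  have indAA: "indep_var borel (Af i) borel (Af i')" if "i \<ge> 1" "i' \<ge> 1" "i \<noteq> i'" for i i'
    unfolding eqA by (rule indep_restrict_fun[OF ind Gdisj[OF that(3)] G_IS[OF that(1)] G_IS[OF that(2)] mFA mFA])
  have indBB: "indep_var borel (Bf i) borel (Bf i')" if "i \<ge> 1" "i' \<ge> 1" "i \<noteq> i'" for i i'
    unfolding eqB by (rule indep_restrict_fun[OF ind Gdisj[OF that(3)] G_IS[OF that(1)] G_IS[OF that(2)] mFB mFB])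
  have indVK: "indep_var borel (\<lambda>\<omega>. F1 (Vs i \<omega>)) borel (\<lambda>\<omega>. F2 (restrict (\<lambda>z. Z z \<omega>) (KW i)))"
    if "i \<ge> 1" and F1: "F1 \<in> borel_measurable borel" and F2: "F2 \<in> borel_measurable (PiM (KW i) (\<lambda>_. borel))" for i F1 F2
  proof -
    have "indep_var borel (\<lambda>\<omega>. (\<lambda>f. F1 (f (Inr i))) (restrict (\<lambda>z. Z z \<omega>) {Inr i}))
         borel (\<lambda>\<omega>. F2 (restrict (\<lambda>z. Z z \<omega>) (KW i)))"
      by (rule indep_restrict_fun[OF ind KWdisj Ri_IS[OF that(1)] KW_IS[OF that(1)] measurable_compose[OF cm3 F1] F2])
    then show ?thesis by (simp add: Z_def)
  qed
  have facts: "integrable M (Af i) \<and> expectation (Af i) = mr * gl + mr * ma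
     \<and> integrable M (Bf i) \<and> expectation (Bf i) = mr * ma
     \<and> integrable M (\<lambda>\<omega>. (Af i \<omega>)\<^sup>2) \<and> expectation (\<lambda>\<omega>. (Af i \<omega>)\<^sup>2) \<le> 4 * c^4
     \<and> integrable M (\<lambda>\<omega>. (Bf i \<omega>)\<^sup>2) \<and> expectation (\<lambda>\<omega>. (Bf i \<omega>)\<^sup>2) \<le> 4 * c^4" if i1: "i \<ge> 1" for i
  proof -
    note nfV = normal_facts[OF c dV[OF i1]]
    note nfW = normal_facts[OF c dW[OF i1, of l]]
    have gh: "integrable M (\<lambda>\<omega>. ind (s i \<omega>) * Wv i \<omega> $ l) \<and> expectation (\<lambda>\<omega>. ind (s i \<omega>) * Wv i \<omega> $ l) = gl"
      using gauss_halfspace[OF c indWc[OF i1] dW[OF i1] y0, of l] by (simp add: s_def gl_def)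
    have iX: "indep_var borel (\<lambda>\<omega>. relu (Vs i \<omega>)) borel (\<lambda>\<omega>. ind (s i \<omega>) * Wv i \<omega> $ l)"
    proof -
      have "indep_var borel (\<lambda>\<omega>. relu (Vs i \<omega>)) borel (\<lambda>\<omega>. (\<lambda>f. ind (\<Sum>m\<in>UNIV. f (Inl (i, m)) * y $ m) * f (Inl (i, l))) (restrict (\<lambda>z. Z z \<omega>) (KW i)))"
        by (rule indVK[OF i1 relu_measurable]) (intro meas_intros pim_comp inK2)
      then show ?thesis by (simp add: Z_def inK2 s_def)
    qed
    have iB: "indep_var borel (\<lambda>\<omega>. relu (Vs i \<omega>)) borel (\<lambda>\<omega>. \<bar>Wv i \<omega> $ l\<bar>)"
    proof -
      have "indep_var borel (\<lambda>\<omega>. relu (Vs i \<omega>)) borel (\<lambda>\<omega>. (\<lambda>f. \<bar>f (Inl (i, l))\<bar>) (restrict (\<lambda>z. Z z \<omega>) (KW i)))"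
        by (rule indVK[OF i1 relu_measurable]) (intro meas_intros pim_comp inK2)
      then show ?thesis by (simp add: Z_def inK2)
    qed
    have iS: "indep_var borel (\<lambda>\<omega>. (Vs i \<omega>)\<^sup>2) borel (\<lambda>\<omega>. (Wv i \<omega> $ l)\<^sup>2)"
    proof -
      have "indep_var borel (\<lambda>\<omega>. (Vs i \<omega>)\<^sup>2) borel (\<lambda>\<omega>. (\<lambda>f. (f (Inl (i, l)))\<^sup>2) (restrict (\<lambda>z. Z z \<omega>) (KW i)))"
        by (rule indVK[OF i1]) (simp, intro meas_intros pim_comp inK2)
      then show ?thesis by (simp add: Z_def inK2)
    qed
    have iXf: "integrable M (Xf i)" and eXf: "expectation (Xf i) = mr * gl"
    proof -
      have e: "Xf i = (\<lambda>\<omega>. relu (Vs i \<omega>) * (ind (s i \<omega>) * Wv i \<omega> $ l))" by (auto simp: Xf_def fun_eq_iff)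
      show "integrable M (Xf i)" unfolding e by (rule indep_var_integrable[OF iX nfV(7) conjunct1[OF gh]])
      have "expectation (\<lambda>\<omega>. relu (Vs i \<omega>) * (ind (s i \<omega>) * Wv i \<omega> $ l)) = expectation (\<lambda>\<omega>. relu (Vs i \<omega>)) * expectation (\<lambda>\<omega>. ind (s i \<omega>) * Wv i \<omega> $ l)"
        by (rule indep_var_lebesgue_integral[OF iX nfV(7) conjunct1[OF gh]])
      then show "expectation (Xf i) = mr * gl" unfolding e nfV(8) conjunct2[OF gh] mr_def .
    qed
    have iBf: "integrable M (Bf i)" and eBf: "expectation (Bf i) = mr * ma"
    proof -
      have e: "Bf i = (\<lambda>\<omega>. relu (Vs i \<omega>) * \<bar>Wv i \<omega> $ l\<bar>)" by (auto simp: Bf_def fun_eq_iff)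
      show "integrable M (Bf i)" unfolding e by (rule indep_var_integrable[OF iB nfV(7) nfW(3)])
      have "expectation (\<lambda>\<omega>. relu (Vs i \<omega>) * \<bar>Wv i \<omega> $ l\<bar>) = expectation (\<lambda>\<omega>. relu (Vs i \<omega>)) * expectation (\<lambda>\<omega>. \<bar>Wv i \<omega> $ l\<bar>)"
        by (rule indep_var_lebesgue_integral[OF iB nfV(7) nfW(3)])
      then show "expectation (Bf i) = mr * ma" unfolding e nfV(8) nfW(4) mr_def ma_def .
    qed
    have iVW: "integrable M (\<lambda>\<omega>. (Vs i \<omega>)\<^sup>2 * (Wv i \<omega> $ l)\<^sup>2)"
      by (rule indep_var_integrable[OF iS nfV(5) nfW(5)])
    have eVW: "expectation (\<lambda>\<omega>. (Vs i \<omega>)\<^sup>2 * (Wv i \<omega> $ l)\<^sup>2) = c^4"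
      using indep_var_lebesgue_integral[OF iS nfV(5) nfW(5)] nfV(6) nfW(6) by (simp add: power_mult_distrib[symmetric] power2_eq_square power4_eq_xxxx)
    have i4: "integrable M (\<lambda>\<omega>. 4 * ((Vs i \<omega>)\<^sup>2 * (Wv i \<omega> $ l)\<^sup>2))" using iVW by simp
    have e4: "expectation (\<lambda>\<omega>. 4 * ((Vs i \<omega>)\<^sup>2 * (Wv i \<omega> $ l)\<^sup>2)) = 4 * c^4" using eVW by simp
    have bA: "(Af i \<omega>)\<^sup>2 \<le> 4 * ((Vs i \<omega>)\<^sup>2 * (Wv i \<omega> $ l)\<^sup>2)" for \<omega>
    proof -
      have "\<bar>Af i \<omega>\<bar> \<le> \<bar>2 * (\<bar>Vs i \<omega>\<bar> * \<bar>Wv i \<omega> $ l\<bar>)\<bar>"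
      proof -
        have r: "\<bar>relu (Vs i \<omega>)\<bar> \<le> \<bar>Vs i \<omega>\<bar>" by (rule relu_abs)
        have il: "\<bar>ind (s i \<omega>)\<bar> \<le> 1" using ind_01[of "s i \<omega>"] by auto
        have "\<bar>relu (Vs i \<omega>) * ind (s i \<omega>) * Wv i \<omega> $ l\<bar> = \<bar>relu (Vs i \<omega>)\<bar> * \<bar>ind (s i \<omega>)\<bar> * \<bar>Wv i \<omega> $ l\<bar>"
          by (simp add: abs_mult)
        also have "\<dots> \<le> \<bar>Vs i \<omega>\<bar> * 1 * \<bar>Wv i \<omega> $ l\<bar>"
          by (intro mult_mono r il) auto
        finally have "\<bar>relu (Vs i \<omega>) * ind (s i \<omega>) * Wv i \<omega> $ l\<bar> \<le> \<bar>Vs i \<omega>\<bar> * \<bar>Wv i \<omega> $ l\<bar>" by simp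
        moreover have "\<bar>relu (Vs i \<omega>) * \<bar>Wv i \<omega> $ l\<bar>\<bar> \<le> \<bar>Vs i \<omega>\<bar> * \<bar>Wv i \<omega> $ l\<bar>"
          using r by (simp add: abs_mult mult_right_mono)
        ultimately have "\<bar>relu (Vs i \<omega>) * ind (s i \<omega>) * Wv i \<omega> $ l\<bar> + \<bar>relu (Vs i \<omega>) * \<bar>Wv i \<omega> $ l\<bar>\<bar>
            \<le> \<bar>Vs i \<omega>\<bar> * \<bar>Wv i \<omega> $ l\<bar> + \<bar>Vs i \<omega>\<bar> * \<bar>Wv i \<omega> $ l\<bar>" by (rule add_mono)
        then have "\<bar>Af i \<omega>\<bar> \<le> \<bar>Vs i \<omega>\<bar> * \<bar>Wv i \<omega> $ l\<bar> + \<bar>Vs i \<omega>\<bar> * \<bar>Wv i \<omega> $ l\<bar>"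
          unfolding Af_def by (rule order_trans[OF abs_triangle_ineq])
        also have "\<dots> = \<bar>2 * (\<bar>Vs i \<omega>\<bar> * \<bar>Wv i \<omega> $ l\<bar>)\<bar>" by (simp add: abs_mult)
        finally show ?thesis .
      qed
      then have "(Af i \<omega>)\<^sup>2 \<le> (2 * (\<bar>Vs i \<omega>\<bar> * \<bar>Wv i \<omega> $ l\<bar>))\<^sup>2" by (simp only: abs_le_square_iff)
      also have "\<dots> = 4 * ((Vs i \<omega>)\<^sup>2 * (Wv i \<omega> $ l)\<^sup>2)" by (simp add: power_mult_distrib)
      finally show ?thesis .
    qed
    have bB: "(Bf i \<omega>)\<^sup>2 \<le> 4 * ((Vs i \<omega>)\<^sup>2 * (Wv i \<omega> $ l)\<^sup>2)" for \<omega>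
    proof -
      have "\<bar>Bf i \<omega>\<bar> \<le> \<bar>\<bar>Vs i \<omega>\<bar> * \<bar>Wv i \<omega> $ l\<bar>\<bar>"
        using relu_abs[of "Vs i \<omega>"] by (simp add: Bf_def abs_mult mult_right_mono)
      then have "(Bf i \<omega>)\<^sup>2 \<le> (\<bar>Vs i \<omega>\<bar> * \<bar>Wv i \<omega> $ l\<bar>)\<^sup>2" by (simp only: abs_le_square_iff)
      also have "\<dots> = (Vs i \<omega>)\<^sup>2 * (Wv i \<omega> $ l)\<^sup>2" by (simp only: power_mult_distrib power2_abs)
      also have "\<dots> \<le> 4 * ((Vs i \<omega>)\<^sup>2 * (Wv i \<omega> $ l)\<^sup>2)" by simp
      finally show ?thesis .
    qed
    have mA2: "(\<lambda>\<omega>. (Af i \<omega>)\<^sup>2) \<in> borel_measurable M" by (rule borel_measurable_power[OF mA[OF i1]])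
    have mB2: "(\<lambda>\<omega>. (Bf i \<omega>)\<^sup>2) \<in> borel_measurable M" by (rule borel_measurable_power[OF mB[OF i1]])
    have iA2: "integrable M (\<lambda>\<omega>. (Af i \<omega>)\<^sup>2)"
      by (rule Bochner_Integration.integrable_bound[OF i4 mA2]) (use bA in auto)
    have iB2: "integrable M (\<lambda>\<omega>. (Bf i \<omega>)\<^sup>2)"
      by (rule Bochner_Integration.integrable_bound[OF i4 mB2]) (use bB in auto)
    have eA2: "expectation (\<lambda>\<omega>. (Af i \<omega>)\<^sup>2) \<le> 4 * c^4"
      using integral_mono[OF iA2 i4 bA] e4 by simp
    have eB2: "expectation (\<lambda>\<omega>. (Bf i \<omega>)\<^sup>2) \<le> 4 * c^4"
      using integral_mono[OF iB2 i4 bB] e4 by simp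
    have iAf: "integrable M (Af i)" unfolding AfX[abs_def] using iXf iBf by simp
    have eAf: "expectation (Af i) = mr * gl + mr * ma" unfolding AfX[abs_def] using iXf iBf eXf eBf by simp
    show ?thesis using iAf eAf iBf eBf iA2 eA2 iB2 eB2 by blast
  qed
  have nnA: "0 \<le> Af i \<omega>" for i \<omega>
  proof -
    have "Af i \<omega> = relu (Vs i \<omega>) * (ind (s i \<omega>) * Wv i \<omega> $ l + \<bar>Wv i \<omega> $ l\<bar>)"
      by (simp add: Af_def algebra_simps)
    moreover have "0 \<le> ind (s i \<omega>) * Wv i \<omega> $ l + \<bar>Wv i \<omega> $ l\<bar>"
      using ind_01[of "s i \<omega>"] by auto
    ultimately show ?thesis using relu_nonneg[of "Vs i \<omega>"] by simp
  qed
  have nnB: "0 \<le> Bf i \<omega>" for i \<omega> using relu_nonneg[of "Vs i \<omega>"] by (simp add: Bf_def)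
  have A_ae: "AE \<omega> in M. (\<lambda>N. (\<Sum>n<N. Af (Suc n) \<omega>) / real N) \<longlonglongrightarrow> mr * gl + mr * ma"
  proof (rule slln_pw[where B="4 * c^4"])
    show "(Af (Suc i)) \<in> borel_measurable M" for i by (rule mA) simp
    show "0 \<le> Af (Suc i) \<omega>" for i \<omega> by (rule nnA)
    show "indep_var borel (Af (Suc i)) borel (Af (Suc j))" if "i \<noteq> j" for i j
      by (rule indAA) (use that in auto)
    show "integrable M (\<lambda>\<omega>. (Af (Suc i) \<omega>)\<^sup>2)" for i using facts[of "Suc i"] by simp
    show "expectation (\<lambda>\<omega>. (Af (Suc i) \<omega>)\<^sup>2) \<le> 4 * c^4" for i using facts[of "Suc i"] by simp
    show "expectation (Af (Suc i)) = mr * gl + mr * ma" for i using facts[of "Suc i"] by simp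
  qed
  have B_ae: "AE \<omega> in M. (\<lambda>N. (\<Sum>n<N. Bf (Suc n) \<omega>) / real N) \<longlonglongrightarrow> mr * ma"
  proof (rule slln_pw[where B="4 * c^4"])
    show "(Bf (Suc i)) \<in> borel_measurable M" for i by (rule mB) simp
    show "0 \<le> Bf (Suc i) \<omega>" for i \<omega> by (rule nnB)
    show "indep_var borel (Bf (Suc i)) borel (Bf (Suc j))" if "i \<noteq> j" for i j
      by (rule indBB) (use that in auto)
    show "integrable M (\<lambda>\<omega>. (Bf (Suc i) \<omega>)\<^sup>2)" for i using facts[of "Suc i"] by simp
    show "expectation (\<lambda>\<omega>. (Bf (Suc i) \<omega>)\<^sup>2) \<le> 4 * c^4" for i using facts[of "Suc i"] by simp
    show "expectation (Bf (Suc i)) = mr * ma" for i using facts[of "Suc i"] by simp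
  qed
  have lim_eq: "mr * gl = c\<^sup>2 / (2 * pi * norm y) * y $ l"
  proof -
    have "sqrt (2 * pi) * sqrt (2 * pi) = 2 * pi" by simp
    then show ?thesis by (simp add: mr_def gl_def field_simps power2_eq_square)
  qed
  show ?thesis
  proof (rule AE_mp[OF AE_conjI[OF A_ae B_ae]], rule AE_I2, intro impI)
    fix \<omega> assume H: "(\<lambda>N. (\<Sum>n<N. Af (Suc n) \<omega>) / real N) \<longlonglongrightarrow> mr * gl + mr * ma
       \<and> (\<lambda>N. (\<Sum>n<N. Bf (Suc n) \<omega>) / real N) \<longlonglongrightarrow> mr * ma"
    have "(\<lambda>N. (\<Sum>n<N. Af (Suc n) \<omega>) / real N - (\<Sum>n<N. Bf (Suc n) \<omega>) / real N) \<longlonglongrightarrow> (mr * gl + mr * ma) - mr * ma"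
      using H by (intro tendsto_diff) auto
    moreover have "(\<Sum>n<N. Af (Suc n) \<omega>) / real N - (\<Sum>n<N. Bf (Suc n) \<omega>) / real N
        = (\<Sum>n<N. relu (Vs (Suc n) \<omega>) * ind (\<Sum>m\<in>UNIV. Wv (Suc n) \<omega> $ m * y $ m) * Wv (Suc n) \<omega> $ l) / real N" for N
      by (simp add: Af_def Bf_def s_def sum_subtractf diff_divide_distrib[symmetric] sum.distrib)
    ultimately show "(\<lambda>N. (\<Sum>n<N. relu (Vs (Suc n) \<omega>) * ind (\<Sum>m\<in>UNIV. Wv (Suc n) \<omega> $ m * y $ m) * Wv (Suc n) \<omega> $ l) / real N)
            \<longlonglongrightarrow> c\<^sup>2 / (2 * pi * norm y) * y $ l"
      using lim_eq by simp
  qed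
qed



lemma (in prob_space) main_j:
  fixes Wv :: "nat \<Rightarrow> 'a \<Rightarrow> real^'p" and Vs :: "nat \<Rightarrow> 'a \<Rightarrow> real" and y :: "real^'p"
  assumes c: "c > 0" and y0: "y \<noteq> 0"
    and dW: "\<And>i m. i \<ge> 1 \<Longrightarrow> distributed M lborel (\<lambda>\<omega>. Wv i \<omega> $ m) (normal_density 0 c)"
    and dV: "\<And>i. i \<ge> 1 \<Longrightarrow> distributed M lborel (Vs i) (normal_density 0 c)"
    and indA: "indep_vars (\<lambda>_. borel) (\<lambda>z. case z of Inl (i, m) \<Rightarrow> (\<lambda>\<omega>. Wv i \<omega> $ m) | Inr i \<Rightarrow> Vs i)
                 ({Inl (i, m) | i m. i \<ge> 1} \<union> {Inr i | i. i \<ge> 1})"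
  shows "AE \<omega> in M. (\<lambda>N. (1 / real N) *\<^sub>R (\<Sum>i=1..N. (relu (Vs i \<omega>) * ind (Wv i \<omega> \<bullet> y)) *\<^sub>R Wv i \<omega>))
            \<longlonglongrightarrow> (c\<^sup>2 / (2 * pi * norm y)) *\<^sub>R y"
proof -
  have all: "AE \<omega> in M. \<forall>l\<in>UNIV. (\<lambda>N. (\<Sum>n<N. relu (Vs (Suc n) \<omega>) * ind (\<Sum>m\<in>UNIV. Wv (Suc n) \<omega> $ m * y $ m) * Wv (Suc n) \<omega> $ l) / real N)
            \<longlonglongrightarrow> c\<^sup>2 / (2 * pi * norm y) * y $ l"
  proof -
    have fin: "finite (UNIV :: 'p set)" by simp
    show ?thesis unfolding AE_finite_all[OF fin] using main_jl[OF c y0 dW dV indA] by blast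
  qed
  show ?thesis
  proof (rule AE_mp[OF all], rule AE_I2, intro impI)
    fix \<omega> assume H: "\<forall>l\<in>UNIV. (\<lambda>N. (\<Sum>n<N. relu (Vs (Suc n) \<omega>) * ind (\<Sum>m\<in>UNIV. Wv (Suc n) \<omega> $ m * y $ m) * Wv (Suc n) \<omega> $ l) / real N)
            \<longlonglongrightarrow> c\<^sup>2 / (2 * pi * norm y) * y $ l"
    show "(\<lambda>N. (1 / real N) *\<^sub>R (\<Sum>i=1..N. (relu (Vs i \<omega>) * ind (Wv i \<omega> \<bullet> y)) *\<^sub>R Wv i \<omega>))
            \<longlonglongrightarrow> (c\<^sup>2 / (2 * pi * norm y)) *\<^sub>R y"
    proof (rule vec_tendstoI)
      fix l
      have e: "((1 / real N) *\<^sub>R (\<Sum>i=1..N. (relu (Vs i \<omega>) * ind (Wv i \<omega> \<bullet> y)) *\<^sub>R Wv i \<omega>)) $ l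
          = (\<Sum>n<N. relu (Vs (Suc n) \<omega>) * ind (\<Sum>m\<in>UNIV. Wv (Suc n) \<omega> $ m * y $ m) * Wv (Suc n) \<omega> $ l) / real N" for N
        by (simp add: sum_component sum_shift1[unfolded One_nat_def] inner_vec_def divide_inverse mult_ac)
      show "(\<lambda>N. ((1 / real N) *\<^sub>R (\<Sum>i=1..N. (relu (Vs i \<omega>) * ind (Wv i \<omega> \<bullet> y)) *\<^sub>R Wv i \<omega>)) $ l)
            \<longlonglongrightarrow> ((c\<^sup>2 / (2 * pi * norm y)) *\<^sub>R y) $ l"
        unfolding e using H by simp
    qed
  qed
qed

lemma assemble:
  fixes A :: "nat \<Rightarrow> real^'p^'d" and S :: "nat \<Rightarrow> nat \<Rightarrow> real^'p" and L :: "nat \<Rightarrow> real^'p"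
  assumes "\<forall>j\<in>I. (\<lambda>N. (1 / real N) *\<^sub>R S j N) \<longlonglongrightarrow> L j"
  shows "(\<lambda>N. (1 / (Zt * real N)) *\<^sub>R (\<Sum>j\<in>I. A j *v S j N)) \<longlonglongrightarrow> (1 / Zt) *\<^sub>R (\<Sum>j\<in>I. A j *v L j)"
proof -
  have e: "(1 / (Zt * real N)) *\<^sub>R (\<Sum>j\<in>I. A j *v S j N) = (1 / Zt) *\<^sub>R (\<Sum>j\<in>I. A j *v ((1 / real N) *\<^sub>R S j N))" for N
    by (simp add: scaleR_sum_right matrix_vector_mult_scaleR)
  have "(\<lambda>N. (1 / Zt) *\<^sub>R (\<Sum>j\<in>I. A j *v ((1 / real N) *\<^sub>R S j N))) \<longlonglongrightarrow> (1 / Zt) *\<^sub>R (\<Sum>j\<in>I. A j *v L j)"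
    using assms by (intro tendsto_scaleR tendsto_const tendsto_sum bounded_linear.tendsto[OF matrix_vector_mul_bounded_linear]) auto
  then show ?thesis unfolding e .
qed

lemma target_eq:
  fixes A :: "nat \<Rightarrow> real^'p^'d" and y :: "nat \<Rightarrow> real^'p"
  shows "(1 / Zt) *\<^sub>R (\<Sum>j\<in>I. A j *v ((c\<^sup>2 / (2 * pi * norm (y j))) *\<^sub>R y j))
       = (c\<^sup>2 / (2 * pi * Zt)) *\<^sub>R (\<Sum>j\<in>I. (1 / norm (y j)) *\<^sub>R (A j *v y j))"
  by (simp add: scaleR_sum_right matrix_vector_mult_scaleR field_simps)


theorem theorem1:
  fixes M :: "'a measure"
    and c Zt :: real
    and J k :: nat
    and x :: "real^'d"
    and D :: "nat \<Rightarrow> real^'d^'p"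
    and w :: "nat \<Rightarrow> 'a \<Rightarrow> real^'p"
    and V :: "nat \<Rightarrow> nat \<Rightarrow> 'a \<Rightarrow> real"
  assumes M: "prob_space M"
    and c: "c > 0"
    and Zt: "Zt > 0"
    and y_nz: "\<And>j. j \<in> {1..J} \<Longrightarrow> D j *v x \<noteq> 0"
    and w_meas: "\<And>i. i \<ge> 1 \<Longrightarrow> w i \<in> borel_measurable M"
    and w_normal: "\<And>i l. i \<ge> 1 \<Longrightarrow>
           distributed M lborel (\<lambda>\<omega>. w i \<omega> $ l) (normal_density 0 c)"
    and V_normal: "\<And>q. q \<ge> 1 \<Longrightarrow> distributed M lborel (V q k) (normal_density 0 c)"
    and indep: "prob_space.indep_vars M (\<lambda>_. borel)
           (\<lambda>z. case z of Inl (i, l) \<Rightarrow> (\<lambda>\<omega>. w i \<omega> $ l) | Inr q \<Rightarrow> V q k)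
           ({Inl (i, l) | i l. i \<ge> 1} \<union> {Inr q | q. q \<ge> 1})"
  shows "(AE \<omega> in M. (\<lambda>N. sGBP Zt J D (\<lambda>i. w i \<omega>) (\<lambda>q k'. V q k' \<omega>) k N x)
            \<longlonglongrightarrow> (c\<^sup>2 / (2 * pi * Zt)) *\<^sub>R
                 (\<Sum>j=1..J. (1 / norm (D j *v x)) *\<^sub>R (transpose (D j) *v (D j *v x))))
       \<and> (\<forall>C0::real. C0 > 0 \<longrightarrow> (\<forall>j\<in>{1..J}. norm (D j *v x) = C0) \<longrightarrow>
            (\<Sum>j=1..J. transpose (D j) ** D j) = mat (real CARD('p)) \<longrightarrow>
            (c\<^sup>2 / (2 * pi * Zt)) *\<^sub>R
                 (\<Sum>j=1..J. (1 / norm (D j *v x)) *\<^sub>R (transpose (D j) *v (D j *v x)))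
              = (c\<^sup>2 * real CARD('p) / (2 * pi * C0 * Zt)) *\<^sub>R x
            \<and> (Zt = c\<^sup>2 * real CARD('p) / (2 * pi * C0) \<longrightarrow>
               (c\<^sup>2 / (2 * pi * Zt)) *\<^sub>R
                 (\<Sum>j=1..J. (1 / norm (D j *v x)) *\<^sub>R (transpose (D j) *v (D j *v x))) = x))"
proof -
  interpret P: prob_space M by (rule M)
  have part1: "AE \<omega> in M. (\<lambda>N. sGBP Zt J D (\<lambda>i. w i \<omega>) (\<lambda>q k'. V q k' \<omega>) k N x)
            \<longlonglongrightarrow> (c\<^sup>2 / (2 * pi * Zt)) *\<^sub>R
                 (\<Sum>j=1..J. (1 / norm (D j *v x)) *\<^sub>R (transpose (D j) *v (D j *v x)))"
  proof -
    have perj: "AE \<omega> in M. (\<lambda>N. (1 / real N) *\<^sub>R (\<Sum>i=1..N. (relu (V (qidx J i j) k \<omega>) * ind (w i \<omega> \<bullet> (D j *v x))) *\<^sub>R w i \<omega>))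
            \<longlonglongrightarrow> (c\<^sup>2 / (2 * pi * norm (D j *v x))) *\<^sub>R (D j *v x)" if j: "j \<in> {1..J}" for j
    proof -
      define g :: "(nat \<times> 'p) + nat \<Rightarrow> (nat \<times> 'p) + nat" where "g = case_sum Inl (\<lambda>i. Inr (qidx J i j))"
      define IS' :: "((nat \<times> 'p) + nat) set" where "IS' = {Inl (i, m) | i m. i \<ge> 1} \<union> {Inr i | i. i \<ge> 1}"
      let ?Y = "\<lambda>z. case z of Inl (i, l) \<Rightarrow> (\<lambda>\<omega>. w i \<omega> $ l) | Inr q \<Rightarrow> V q k"
      have J1: "J \<ge> 1" "j \<ge> 1" using j by auto
      have q1: "qidx J i j \<ge> 1" for i using J1 by (simp add: qidx_def)
      have sub: "g ` IS' \<subseteq> {Inl (i, l) | i l. i \<ge> 1} \<union> {Inr q | q. q \<ge> 1}"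
        using q1 by (auto simp: g_def IS'_def)
      have inj: "inj_on g IS'"
      proof (rule inj_onI)
        fix a b assume a: "a \<in> IS'" and b: "b \<in> IS'" and e: "g a = g b"
        show "a = b"
        proof (cases a; cases b)
          fix i i' assume ai: "a = Inr i" and bi: "b = Inr i'"
          then have "(i - 1) * J + j = (i' - 1) * J + j" using e by (simp add: g_def qidx_def)
          then have "i - 1 = i' - 1" using J1 by simp
          moreover have "i \<ge> 1" "i' \<ge> 1" using a b ai bi by (auto simp: IS'_def)
          ultimately show "a = b" using ai bi by simp
        qed (use e in \<open>auto simp: g_def\<close>)
      qed
      have ind0: "P.indep_vars (\<lambda>_. borel) ?Y (g ` IS')"
        by (rule P.indep_vars_subset[OF indep sub])
      have ind1: "P.indep_vars (\<lambda>_. borel) (\<lambda>z. ?Y (g z)) IS'"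
        by (rule P.indep_vars_reindex[OF ind0 inj])
      have eqY: "(\<lambda>z. ?Y (g z)) = (\<lambda>z. case z of Inl (i, m) \<Rightarrow> (\<lambda>\<omega>. w i \<omega> $ m) | Inr i \<Rightarrow> V (qidx J i j) k)"
        by (rule ext) (auto simp: g_def split: sum.split)
      have indA: "P.indep_vars (\<lambda>_. borel) (\<lambda>z. case z of Inl (i, m) \<Rightarrow> (\<lambda>\<omega>. w i \<omega> $ m) | Inr i \<Rightarrow> V (qidx J i j) k)
                 ({Inl (i, m) | i m. i \<ge> 1} \<union> {Inr i | i. i \<ge> 1})"
        using ind1 unfolding eqY IS'_def .
      have dV: "distributed M lborel (V (qidx J i j) k) (normal_density 0 c)" if "i \<ge> 1" for i
        by (rule V_normal[OF q1])
      show ?thesis by (rule P.main_j[OF c y_nz[OF j] w_normal dV indA])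
    qed
    have "AE \<omega> in M. \<forall>j\<in>{1..J}. (\<lambda>N. (1 / real N) *\<^sub>R (\<Sum>i=1..N. (relu (V (qidx J i j) k \<omega>) * ind (w i \<omega> \<bullet> (D j *v x))) *\<^sub>R w i \<omega>))
            \<longlonglongrightarrow> (c\<^sup>2 / (2 * pi * norm (D j *v x))) *\<^sub>R (D j *v x)"
      unfolding AE_finite_all[OF finite_atLeastAtMost] using perj by blast
    then show ?thesis
    proof (rule AE_mp, intro AE_I2 impI)
      fix \<omega> assume H: "\<forall>j\<in>{1..J}. (\<lambda>N. (1 / real N) *\<^sub>R (\<Sum>i=1..N. (relu (V (qidx J i j) k \<omega>) * ind (w i \<omega> \<bullet> (D j *v x))) *\<^sub>R w i \<omega>))
            \<longlonglongrightarrow> (c\<^sup>2 / (2 * pi * norm (D j *v x))) *\<^sub>R (D j *v x)"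
      have "(\<lambda>N. (1 / (Zt * real N)) *\<^sub>R (\<Sum>j\<in>{1..J}. transpose (D j) *v (\<Sum>i=1..N. (relu (V (qidx J i j) k \<omega>) * ind (w i \<omega> \<bullet> (D j *v x))) *\<^sub>R w i \<omega>)))
          \<longlonglongrightarrow> (1 / Zt) *\<^sub>R (\<Sum>j\<in>{1..J}. transpose (D j) *v ((c\<^sup>2 / (2 * pi * norm (D j *v x))) *\<^sub>R (D j *v x)))"
        by (rule assemble[OF H])
      then show "(\<lambda>N. sGBP Zt J D (\<lambda>i. w i \<omega>) (\<lambda>q k'. V q k' \<omega>) k N x)
            \<longlonglongrightarrow> (c\<^sup>2 / (2 * pi * Zt)) *\<^sub>R
                 (\<Sum>j=1..J. (1 / norm (D j *v x)) *\<^sub>R (transpose (D j) *v (D j *v x)))"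
        unfolding sGBP_def target_eq .
    qed
  qed
  have part2: "\<forall>C0::real. C0 > 0 \<longrightarrow> (\<forall>j\<in>{1..J}. norm (D j *v x) = C0) \<longrightarrow>
            (\<Sum>j=1..J. transpose (D j) ** D j) = mat (real CARD('p)) \<longrightarrow>
            (c\<^sup>2 / (2 * pi * Zt)) *\<^sub>R
                 (\<Sum>j=1..J. (1 / norm (D j *v x)) *\<^sub>R (transpose (D j) *v (D j *v x)))
              = (c\<^sup>2 * real CARD('p) / (2 * pi * C0 * Zt)) *\<^sub>R x
            \<and> (Zt = c\<^sup>2 * real CARD('p) / (2 * pi * C0) \<longrightarrow>
               (c\<^sup>2 / (2 * pi * Zt)) *\<^sub>R
                 (\<Sum>j=1..J. (1 / norm (D j *v x)) *\<^sub>R (transpose (D j) *v (D j *v x))) = x)"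
  proof (intro allI impI)
    fix C0 :: real
    assume C0: "C0 > 0" and nC: "\<forall>j\<in>{1..J}. norm (D j *v x) = C0"
      and DD: "(\<Sum>j=1..J. transpose (D j) ** D j) = mat (real CARD('p))"
    have "(\<Sum>j=1..J. (1 / norm (D j *v x)) *\<^sub>R (transpose (D j) *v (D j *v x)))
        = (\<Sum>j=1..J. (1 / C0) *\<^sub>R ((transpose (D j) ** D j) *v x))"
      using nC by (intro sum.cong refl) (simp only: matrix_vector_mul_assoc)
    also have "\<dots> = (1 / C0) *\<^sub>R ((\<Sum>j=1..J. transpose (D j) ** D j) *v x)"
      by (simp only: scaleR_sum_right[symmetric] sum_matrix_vector)
    also have "\<dots> = (real CARD('p) / C0) *\<^sub>R x"
      by (simp only: DD mat_vector scaleR_scaleR) simp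
    finally have S: "(\<Sum>j=1..J. (1 / norm (D j *v x)) *\<^sub>R (transpose (D j) *v (D j *v x))) = (real CARD('p) / C0) *\<^sub>R x" .
    show "(c\<^sup>2 / (2 * pi * Zt)) *\<^sub>R
                 (\<Sum>j=1..J. (1 / norm (D j *v x)) *\<^sub>R (transpose (D j) *v (D j *v x)))
              = (c\<^sup>2 * real CARD('p) / (2 * pi * C0 * Zt)) *\<^sub>R x
            \<and> (Zt = c\<^sup>2 * real CARD('p) / (2 * pi * C0) \<longrightarrow>
               (c\<^sup>2 / (2 * pi * Zt)) *\<^sub>R
                 (\<Sum>j=1..J. (1 / norm (D j *v x)) *\<^sub>R (transpose (D j) *v (D j *v x))) = x)"
    proof (intro conjI impI)
      show "(c\<^sup>2 / (2 * pi * Zt)) *\<^sub>R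
                 (\<Sum>j=1..J. (1 / norm (D j *v x)) *\<^sub>R (transpose (D j) *v (D j *v x)))
              = (c\<^sup>2 * real CARD('p) / (2 * pi * C0 * Zt)) *\<^sub>R x"
        unfolding S scaleR_scaleR by (simp add: field_simps)
      assume Z: "Zt = c\<^sup>2 * real CARD('p) / (2 * pi * C0)"
      have h1: "c\<^sup>2 / (2 * pi * Zt) * (real CARD('p) / C0) = 1"
        using c C0 unfolding Z by (simp add: field_simps)
      then show "(c\<^sup>2 / (2 * pi * Zt)) *\<^sub>R
                 (\<Sum>j=1..J. (1 / norm (D j *v x)) *\<^sub>R (transpose (D j) *v (D j *v x))) = x"
        unfolding S scaleR_scaleR h1 by simp
    qed
  qed
  show ?thesis using part1 part2 by blast
qed


end
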